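(* Consider the sub-$\ell^\infty$ structure on $\mathbb{R}^2$ defined by $X_1=\partial_x$, $X_2=x\partial_y$. A regular bang-bang trajectory with more than $3$ arcs is not a time-minimizer. If, moreover, a regular bang-bang trajectory $\gamma$ starts on the $y$-axis (i.e. $\gamma(0)\in\{x=0\}$) and is a time-minimizer, then it has at most $2$ arcs.
   Context: Sub-$\ell^\infty$ structure defined by smooth vector fields $X_1,\dots,X_k$ on a manifold $M$: an admissible trajectory is an absolutely continuous curve $\gamma:[0,T]\to M$ together with a measurable control $u=(u_1,\dots,u_k):[0,T]\to\mathbb{R}^k$ with $|u_i(t)|\le1$ for all $i$ and a.e. $t$, such that $\dot\gamma(t)=\sum_i u_i(t)X_i(\gamma(t))$ for a.e. $t$. It is a time-minimizer (optimal) if no admissible trajectory joins $\gamma(0)$ to $\gamma(T)$ in time less than $T$. An extremal pair is a pair $(\lambda,\gamma)$ where $\gamma$ is admissible with control $u$ and $\lambda:[0,T]\to T^*M$ is absolutely continuous with $\lambda(t)\in T^*_{\gamma(t)}M\setminus\{0\}$, such that, with $\mathcal H(\lambda,p,u)=\sum_i u_i\langle\lambda,X_i(p)\rangle$, in canonical coordinates $\dot\lambda=-\partial_p\mathcal H(\lambda,\gamma,u)$, $\dot\gamma=\partial_\lambda\mathcal H(\lambda,\gamma,u)$ a.e., and there is a constant $\lambda_0\ge0$ with $\sum_iu_i(t)\langle\lambda(t),X_i(\gamma(t))\rangle=\sum_i|\langle\lambda(t),X_i(\gamma(t))\rangle|=\lambda_0$ for a.e. $t$; $\gamma$ is then an extremal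 trajectory and $\lambda$ an extremal lift. The switching functions are $\varphi_j(t)=\langle\lambda(t),X_j(\gamma(t))\rangle$. The restriction of an extremal pair to an open interval $I$ is a regular arc if $\varphi_j(t)\ne0$ for all $t\in I$ and all $j$; arcs are taken maximal (not contained in a strictly larger open interval with the same property). A regular bang-bang trajectory is an extremal trajectory with an extremal lift such that $[0,T]$ minus finitely many points is a finite union of maximal regular arcs (on each of which the control is then constant with values in $\{1,-1\}^k$); these are its arcs. *)

theory Defs
  imports "HOL-Analysis.Analysis"
begin

text \<open>Points of the plane are pairs (x,y); cotangent vectors are pairs (lx,ly) of
 components in the dual basis dx, dy, paired with tangent vectors by the inner product.\<close>

definition abs_cont_on :: "real set \<Rightarrow> (real \<Rightarrow> 'a::real_normed_vector) \<Rightarrow> bool" where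
  "abs_cont_on S f \<longleftrightarrow>
     (\<forall>e>0. \<exists>d>0. \<forall>n::nat. \<forall>a b. (\<forall>i<n. a i \<in> S \<and> b i \<in> S \<and> a i \<le> b i) \<and>
        disjoint_family_on (\<lambda>i. {a i<..<b i}) {..<n} \<and> (\<Sum>i<n. b i - a i) < d
        \<longrightarrow> (\<Sum>i<n. norm (f (b i) - f (a i))) < e)"

definition X1 :: "real \<times> real \<Rightarrow> real \<times> real" where "X1 p = (1, 0)"
definition X2 :: "real \<times> real \<Rightarrow> real \<times> real" where "X2 p = (0, fst p)"

definition Xf :: "nat \<Rightarrow> real \<times> real \<Rightarrow> real \<times> real" where
  "Xf j = (if j = 1 then X1 else X2)"

definition admissible :: "real \<Rightarrow> (real \<Rightarrow> real \<times> real) \<Rightarrow> (real \<Rightarrow> real \<times> real) \<Rightarrow> bool" where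
  "admissible T \<gamma> u \<longleftrightarrow> 0 \<le> T \<and> abs_cont_on {0..T} \<gamma> \<and> u measurable_on {0..T} \<and>
     (AE t in lebesgue. t \<in> {0..T} \<longrightarrow> \<bar>fst (u t)\<bar> \<le> 1 \<and> \<bar>snd (u t)\<bar> \<le> 1) \<and>
     (AE t in lebesgue. t \<in> {0..T} \<longrightarrow>
        (\<gamma> has_vector_derivative (fst (u t) *\<^sub>R X1 (\<gamma> t) + snd (u t) *\<^sub>R X2 (\<gamma> t))) (at t within {0..T}))"

definition time_minimizer :: "real \<Rightarrow> (real \<Rightarrow> real \<times> real) \<Rightarrow> bool" where
  "time_minimizer T \<gamma> \<longleftrightarrow> \<not> (\<exists>T' \<gamma>' u'. T' < T \<and> admissible T' \<gamma>' u' \<and>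
        \<gamma>' 0 = \<gamma> 0 \<and> \<gamma>' T' = \<gamma> T)"

text \<open>Control Hamiltonian H(l,p,u) = u1 <l,X1 p> + u2 <l,X2 p> = u1 lx + u2 x ly.
 Its partial derivatives: d_p H = (u2 ly, 0), d_l H = u1 X1 p + u2 X2 p.\<close>
definition Ham :: "real \<times> real \<Rightarrow> real \<times> real \<Rightarrow> real \<times> real \<Rightarrow> real" where
  "Ham l p u = fst u * (l \<bullet> X1 p) + snd u * (l \<bullet> X2 p)"

definition extremal_pair ::
  "real \<Rightarrow> (real \<Rightarrow> real \<times> real) \<Rightarrow> (real \<Rightarrow> real \<times> real) \<Rightarrow> (real \<Rightarrow> real \<times> real) \<Rightarrow> bool" where
  "extremal_pair T lam \<gamma> u \<longleftrightarrow> admissible T \<gamma> u \<and> abs_cont_on {0..T} lam \<and>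
     (\<forall>t\<in>{0..T}. lam t \<noteq> 0) \<and>
     (AE t in lebesgue. t \<in> {0..T} \<longrightarrow>
        (lam has_vector_derivative (- (snd (u t) * snd (lam t)), 0)) (at t within {0..T}) \<and>
        (\<gamma> has_vector_derivative (fst (u t) *\<^sub>R X1 (\<gamma> t) + snd (u t) *\<^sub>R X2 (\<gamma> t))) (at t within {0..T})) \<and>
     (\<exists>lam0\<ge>0. AE t in lebesgue. t \<in> {0..T} \<longrightarrow>
        Ham (lam t) (\<gamma> t) (u t) = \<bar>lam t \<bullet> X1 (\<gamma> t)\<bar> + \<bar>lam t \<bullet> X2 (\<gamma> t)\<bar> \<and>
        \<bar>lam t \<bullet> X1 (\<gamma> t)\<bar> + \<bar>lam t \<bullet> X2 (\<gamma> t)\<bar> = lam0)"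

definition switching :: "(real \<Rightarrow> real \<times> real) \<Rightarrow> (real \<Rightarrow> real \<times> real) \<Rightarrow> nat \<Rightarrow> real \<Rightarrow> real" where
  "switching lam \<gamma> j t = lam t \<bullet> Xf j (\<gamma> t)"

definition regular_interval ::
  "real \<Rightarrow> (real \<Rightarrow> real \<times> real) \<Rightarrow> (real \<Rightarrow> real \<times> real) \<Rightarrow> real \<times> real \<Rightarrow> bool" where
  "regular_interval T lam \<gamma> I \<longleftrightarrow> 0 \<le> fst I \<and> fst I < snd I \<and> snd I \<le> T \<and>
     (\<forall>t\<in>{fst I<..<snd I}. \<forall>j\<in>{1,2}. switching lam \<gamma> j t \<noteq> 0)"

definition arcs ::
  "real \<Rightarrow> (real \<Rightarrow> real \<times> real) \<Rightarrow> (real \<Rightarrow> real \<times> real) \<Rightarrow> (real \<times> real) set" where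
  "arcs T lam \<gamma> = {I. regular_interval T lam \<gamma> I \<and>
      (\<forall>J. regular_interval T lam \<gamma> J \<and> {fst I<..<snd I} \<subseteq> {fst J<..<snd J} \<longrightarrow> J = I)}"

definition regular_bang_bang_lift ::
  "real \<Rightarrow> (real \<Rightarrow> real \<times> real) \<Rightarrow> (real \<Rightarrow> real \<times> real) \<Rightarrow> (real \<Rightarrow> real \<times> real) \<Rightarrow> bool" where
  "regular_bang_bang_lift T lam \<gamma> u \<longleftrightarrow> extremal_pair T lam \<gamma> u \<and> finite (arcs T lam \<gamma>) \<and>
     (\<exists>F. finite F \<and> {0..T} - F = (\<Union>I\<in>arcs T lam \<gamma>. {fst I<..<snd I}))"

end

theory Submission
  imports Defs
begin

lemma norm_fst_le: "norm (fst v) \<le> norm (v :: 'a::real_normed_vector \<times> 'b::real_normed_vector)"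
  by (cases v) (simp add: norm_Pair)

lemma norm_snd_le: "norm (snd v) \<le> norm (v :: 'a::real_normed_vector \<times> 'b::real_normed_vector)"
  by (cases v) (simp add: norm_Pair)

lemma ac_D:
  assumes "abs_cont_on S f" "e > 0"
  obtains d where "d > 0" "\<And>n::nat. \<And>a b. \<forall>i<n. a i \<in> S \<and> b i \<in> S \<and> a i \<le> b i \<Longrightarrow>
        disjoint_family_on (\<lambda>i. {a i<..<b i}) {..<n} \<Longrightarrow> (\<Sum>i<n. b i - a i) < d
        \<Longrightarrow> (\<Sum>i<n. norm (f (b i) - f (a i))) < e"
proof -
  have "\<exists>d>0. \<forall>n::nat. \<forall>a b. (\<forall>i<n. a i \<in> S \<and> b i \<in> S \<and> a i \<le> b i) \<and>
        disjoint_family_on (\<lambda>i. {a i<..<b i}) {..<n} \<and> (\<Sum>i<n. b i - a i) < d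
        \<longrightarrow> (\<Sum>i<n. norm (f (b i) - f (a i))) < e"
    using assms unfolding abs_cont_on_def by simp
  then obtain d where "d > 0" and H: "\<forall>n::nat. \<forall>a b. (\<forall>i<n. a i \<in> S \<and> b i \<in> S \<and> a i \<le> b i) \<and>
        disjoint_family_on (\<lambda>i. {a i<..<b i}) {..<n} \<and> (\<Sum>i<n. b i - a i) < d
        \<longrightarrow> (\<Sum>i<n. norm (f (b i) - f (a i))) < e" by blast
  show thesis
    apply (rule that[OF \<open>d > 0\<close>])
    using H by blast
qed

lemma ac_I:
  assumes "\<And>e. e > 0 \<Longrightarrow> \<exists>d>0. \<forall>n::nat. \<forall>a b. (\<forall>i<n. a i \<in> S \<and> b i \<in> S \<and> a i \<le> b i) \<longrightarrow>
        disjoint_family_on (\<lambda>i. {a i<..<b i}) {..<n} \<longrightarrow> (\<Sum>i<n. b i - a i) < d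
        \<longrightarrow> (\<Sum>i<n. norm (f (b i) - f (a i))) < e"
  shows "abs_cont_on S f"
  unfolding abs_cont_on_def
proof (intro allI impI)
  fix e :: real assume "e > 0"
  from assms[OF this] obtain d where "d>0" and H: "\<forall>n::nat. \<forall>a b. (\<forall>i<n. a i \<in> S \<and> b i \<in> S \<and> a i \<le> b i) \<longrightarrow>
        disjoint_family_on (\<lambda>i. {a i<..<b i}) {..<n} \<longrightarrow> (\<Sum>i<n. b i - a i) < d
        \<longrightarrow> (\<Sum>i<n. norm (f (b i) - f (a i))) < e" by blast
  show "\<exists>d>0. \<forall>n::nat. \<forall>a b. (\<forall>i<n. a i \<in> S \<and> b i \<in> S \<and> a i \<le> b i) \<and>
        disjoint_family_on (\<lambda>i. {a i<..<b i}) {..<n} \<and> (\<Sum>i<n. b i - a i) < d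
        \<longrightarrow> (\<Sum>i<n. norm (f (b i) - f (a i))) < e"
    using \<open>d>0\<close> H by blast
qed

lemma ac_cont:
  assumes "abs_cont_on {a..b} f"
  shows "continuous_on {a..b} f"
  unfolding continuous_on_iff
proof (intro ballI allI impI)
  fix x e assume x: "x \<in> {a..b}" and e: "(0::real) < e"
  obtain d where d: "d > 0" and H: "\<And>n::nat. \<And>a' b'. \<forall>i<n. a' i \<in> {a..b} \<and> b' i \<in> {a..b} \<and> a' i \<le> b' i \<Longrightarrow>
        disjoint_family_on (\<lambda>i. {a' i<..<b' i}) {..<n} \<Longrightarrow> (\<Sum>i<n. b' i - a' i) < d
        \<Longrightarrow> (\<Sum>i<n. norm (f (b' i) - f (a' i))) < e"
    using ac_D[OF assms e] by blast
  show "\<exists>d>0. \<forall>x'\<in>{a..b}. dist x' x < d \<longrightarrow> dist (f x') (f x) < e"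
  proof (intro exI[of _ d] conjI ballI impI)
    fix x' assume x': "x' \<in> {a..b}" and dx: "dist x' x < d"
    have "(\<Sum>i<1::nat. norm (f ((\<lambda>i. max x' x) i) - f ((\<lambda>i. min x' x) i))) < e"
      by (rule H) (use x x' dx d in \<open>auto simp: disjoint_family_on_def dist_real_def\<close>)
    then show "dist (f x') (f x) < e"
      by (cases "x' \<le> x") (auto simp: dist_norm max_def min_def norm_minus_commute)
  qed (rule d)
qed

lemma ac_subset: "abs_cont_on S f \<Longrightarrow> T \<subseteq> S \<Longrightarrow> abs_cont_on T f"
  unfolding abs_cont_on_def by (meson subsetD)

lemma ac_lip:
  assumes L: "0 \<le> L" and lip: "\<And>s t. s \<in> S \<Longrightarrow> t \<in> S \<Longrightarrow> norm (f s - f t) \<le> L * \<bar>s - t\<bar>"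
  shows "abs_cont_on S f"
proof (rule ac_I)
  fix e :: real assume e: "e > 0"
  show "\<exists>d>0. \<forall>n::nat. \<forall>a b. (\<forall>i<n. a i \<in> S \<and> b i \<in> S \<and> a i \<le> b i) \<longrightarrow>
        disjoint_family_on (\<lambda>i. {a i<..<b i}) {..<n} \<longrightarrow> (\<Sum>i<n. b i - a i) < d
        \<longrightarrow> (\<Sum>i<n. norm (f (b i) - f (a i))) < e"
  proof (intro exI[of _ "e / (L + 1)"] conjI allI impI)
    show "e / (L+1) > 0" using e L by simp
    fix n :: nat and a b assume ab: "\<forall>i<n. a i \<in> S \<and> b i \<in> S \<and> a i \<le> b i"
      and s: "(\<Sum>i<n. b i - a i) < e / (L + 1)"
    have "(\<Sum>i<n. norm (f (b i) - f (a i))) \<le> (\<Sum>i<n. L * (b i - a i))"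
      by (rule sum_mono) (use ab lip in fastforce)
    also have "\<dots> = L * (\<Sum>i<n. b i - a i)" by (simp add: sum_distrib_left)
    also have "\<dots> \<le> L * (e / (L+1))" using s L by (intro mult_left_mono) auto
    also have "\<dots> < e" using e L by (simp add: field_simps)
    finally show "(\<Sum>i<n. norm (f (b i) - f (a i))) < e" .
  qed
qed

lemma ac_diff:
  assumes f: "abs_cont_on S f" and g: "abs_cont_on S g"
  shows "abs_cont_on S (\<lambda>t. f t - g t)"
proof (rule ac_I)
  fix e :: real assume e: "e > 0"
  obtain d1 where d1: "d1 > 0" and H1: "\<And>n::nat. \<And>a b. \<forall>i<n. a i \<in> S \<and> b i \<in> S \<and> a i \<le> b i \<Longrightarrow>
        disjoint_family_on (\<lambda>i. {a i<..<b i}) {..<n} \<Longrightarrow> (\<Sum>i<n. b i - a i) < d1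
        \<Longrightarrow> (\<Sum>i<n. norm (f (b i) - f (a i))) < e/2"
    using ac_D[OF f, of "e/2"] e by auto
  obtain d2 where d2: "d2 > 0" and H2: "\<And>n::nat. \<And>a b. \<forall>i<n. a i \<in> S \<and> b i \<in> S \<and> a i \<le> b i \<Longrightarrow>
        disjoint_family_on (\<lambda>i. {a i<..<b i}) {..<n} \<Longrightarrow> (\<Sum>i<n. b i - a i) < d2
        \<Longrightarrow> (\<Sum>i<n. norm (g (b i) - g (a i))) < e/2"
    using ac_D[OF g, of "e/2"] e by auto
  show "\<exists>d>0. \<forall>n::nat. \<forall>a b. (\<forall>i<n. a i \<in> S \<and> b i \<in> S \<and> a i \<le> b i) \<longrightarrow>
        disjoint_family_on (\<lambda>i. {a i<..<b i}) {..<n} \<longrightarrow> (\<Sum>i<n. b i - a i) < d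
        \<longrightarrow> (\<Sum>i<n. norm ((f (b i) - g (b i)) - (f (a i) - g (a i)))) < e"
  proof (intro exI[of _ "min d1 d2"] conjI allI impI)
    show "min d1 d2 > 0" using d1 d2 by simp
    fix n :: nat and a b assume ab: "\<forall>i<n. a i \<in> S \<and> b i \<in> S \<and> a i \<le> b i"
      and dj: "disjoint_family_on (\<lambda>i. {a i<..<b i}) {..<n}"
      and s: "(\<Sum>i<n. b i - a i) < min d1 d2"
    have "(\<Sum>i<n. norm ((f (b i) - g (b i)) - (f (a i) - g (a i))))
        \<le> (\<Sum>i<n. norm (f (b i) - f (a i)) + norm (g (b i) - g (a i)))"
      by (rule sum_mono) (metis (no_types, lifting) diff_diff_eq diff_diff_eq2 norm_minus_commute norm_triangle_ineq4 add_diff_cancel)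
    also have "\<dots> < e/2 + e/2"
      unfolding sum.distrib using H1[OF ab dj] H2[OF ab dj] s by (intro add_strict_mono) auto
    finally show "(\<Sum>i<n. norm ((f (b i) - g (b i)) - (f (a i) - g (a i)))) < e" by simp
  qed
qed

lemma ac_comp:
  assumes f: "abs_cont_on S f" and h: "\<And>v w. norm (h v - h w) \<le> norm (v - w)"
  shows "abs_cont_on S (\<lambda>t. h (f t))"
proof (rule ac_I)
  fix e :: real assume e: "e > 0"
  obtain d where d: "d > 0" and H: "\<And>n::nat. \<And>a b. \<forall>i<n. a i \<in> S \<and> b i \<in> S \<and> a i \<le> b i \<Longrightarrow>
        disjoint_family_on (\<lambda>i. {a i<..<b i}) {..<n} \<Longrightarrow> (\<Sum>i<n. b i - a i) < d
        \<Longrightarrow> (\<Sum>i<n. norm (f (b i) - f (a i))) < e"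
    using ac_D[OF f e] by auto
  show "\<exists>d>0. \<forall>n::nat. \<forall>a b. (\<forall>i<n. a i \<in> S \<and> b i \<in> S \<and> a i \<le> b i) \<longrightarrow>
        disjoint_family_on (\<lambda>i. {a i<..<b i}) {..<n} \<longrightarrow> (\<Sum>i<n. b i - a i) < d
        \<longrightarrow> (\<Sum>i<n. norm (h (f (b i)) - h (f (a i)))) < e"
  proof (intro exI[of _ d] conjI allI impI)
    fix n :: nat and a b assume ab: "\<forall>i<n. a i \<in> S \<and> b i \<in> S \<and> a i \<le> b i"
      and dj: "disjoint_family_on (\<lambda>i. {a i<..<b i}) {..<n}"
      and s: "(\<Sum>i<n. b i - a i) < d"
    have "(\<Sum>i<n. norm (h (f (b i)) - h (f (a i)))) \<le> (\<Sum>i<n. norm (f (b i) - f (a i)))"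
      by (rule sum_mono) (rule h)
    also have "\<dots> < e" using H[OF ab dj s] .
    finally show "(\<Sum>i<n. norm (h (f (b i)) - h (f (a i)))) < e" .
  qed (rule d)
qed

lemma ac_join:
  assumes f1: "abs_cont_on {a..m} f" and f2: "abs_cont_on {m..b} f" and am: "a \<le> m" and mb: "m \<le> b"
  shows "abs_cont_on {a..b} f"
proof (rule ac_I)
  fix e :: real assume e: "e > 0"
  obtain d1 where d1: "d1 > 0" and H1: "\<And>n::nat. \<And>a' b'. \<forall>i<n. a' i \<in> {a..m} \<and> b' i \<in> {a..m} \<and> a' i \<le> b' i \<Longrightarrow>
        disjoint_family_on (\<lambda>i. {a' i<..<b' i}) {..<n} \<Longrightarrow> (\<Sum>i<n. b' i - a' i) < d1
        \<Longrightarrow> (\<Sum>i<n. norm (f (b' i) - f (a' i))) < e/2"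
    using ac_D[OF f1, of "e/2"] e by auto
  obtain d2 where d2: "d2 > 0" and H2: "\<And>n::nat. \<And>a' b'. \<forall>i<n. a' i \<in> {m..b} \<and> b' i \<in> {m..b} \<and> a' i \<le> b' i \<Longrightarrow>
        disjoint_family_on (\<lambda>i. {a' i<..<b' i}) {..<n} \<Longrightarrow> (\<Sum>i<n. b' i - a' i) < d2
        \<Longrightarrow> (\<Sum>i<n. norm (f (b' i) - f (a' i))) < e/2"
    using ac_D[OF f2, of "e/2"] e by auto
  show "\<exists>d>0. \<forall>n::nat. \<forall>a' b'. (\<forall>i<n. a' i \<in> {a..b} \<and> b' i \<in> {a..b} \<and> a' i \<le> b' i) \<longrightarrow>
        disjoint_family_on (\<lambda>i. {a' i<..<b' i}) {..<n} \<longrightarrow> (\<Sum>i<n. b' i - a' i) < d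
        \<longrightarrow> (\<Sum>i<n. norm (f (b' i) - f (a' i))) < e"
  proof (intro exI[of _ "min d1 d2"] conjI allI impI)
    show "min d1 d2 > 0" using d1 d2 by simp
    fix n :: nat and a' b' assume ab: "\<forall>i<n. a' i \<in> {a..b} \<and> b' i \<in> {a..b} \<and> a' i \<le> b' i"
      and dj: "disjoint_family_on (\<lambda>i. {a' i<..<b' i}) {..<n}"
      and s: "(\<Sum>i<n. b' i - a' i) < min d1 d2"
    define la where "la i = min (a' i) m" for i
    define lb where "lb i = min (b' i) m" for i
    define ra where "ra i = max (a' i) m" for i
    define rb where "rb i = max (b' i) m" for i
    have sub1: "{la i<..<lb i} \<subseteq> {a' i<..<b' i}" for i unfolding la_def lb_def by auto
    have sub2: "{ra i<..<rb i} \<subseteq> {a' i<..<b' i}" for i unfolding ra_def rb_def by auto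
    have dj1: "disjoint_family_on (\<lambda>i. {la i<..<lb i}) {..<n}"
      using dj sub1 unfolding disjoint_family_on_def by blast
    have dj2: "disjoint_family_on (\<lambda>i. {ra i<..<rb i}) {..<n}"
      using dj sub2 unfolding disjoint_family_on_def by blast
    have ab1: "\<forall>i<n. la i \<in> {a..m} \<and> lb i \<in> {a..m} \<and> la i \<le> lb i"
      using ab am unfolding la_def lb_def by auto
    have ab2: "\<forall>i<n. ra i \<in> {m..b} \<and> rb i \<in> {m..b} \<and> ra i \<le> rb i"
      using ab mb unfolding ra_def rb_def by auto
    have "(\<Sum>i<n. lb i - la i) \<le> (\<Sum>i<n. b' i - a' i)"
      by (rule sum_mono) (use ab in \<open>auto simp: la_def lb_def\<close>)
    then have s1: "(\<Sum>i<n. lb i - la i) < d1" using s by simp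
    have "(\<Sum>i<n. rb i - ra i) \<le> (\<Sum>i<n. b' i - a' i)"
      by (rule sum_mono) (use ab in \<open>auto simp: ra_def rb_def\<close>)
    then have s2: "(\<Sum>i<n. rb i - ra i) < d2" using s by simp
    have "norm (f (b' i) - f (a' i)) \<le> norm (f (lb i) - f (la i)) + norm (f (rb i) - f (ra i))" if "i < n" for i
    proof -
      have le: "a' i \<le> b' i" using ab that by auto
      consider "b' i \<le> m" | "m \<le> a' i" | "a' i < m" "m < b' i" by linarith
      then show ?thesis
      proof cases
        case 1 then show ?thesis using le by (simp add: la_def lb_def ra_def rb_def)
      next
        case 2 then show ?thesis using le by (simp add: la_def lb_def ra_def rb_def)
      next
        case 3
        then have "la i = a' i" "lb i = m" "ra i = m" "rb i = b' i" by (auto simp: la_def lb_def ra_def rb_def)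
        have "f (b' i) - f (a' i) = (f m - f (a' i)) + (f (b' i) - f m)" by simp
        then have "norm (f (b' i) - f (a' i)) \<le> norm (f m - f (a' i)) + norm (f (b' i) - f m)"
          by (metis norm_triangle_ineq)
        then show ?thesis using \<open>la i = a' i\<close> \<open>lb i = m\<close> \<open>ra i = m\<close> \<open>rb i = b' i\<close> by simp
      qed
    qed
    then have "(\<Sum>i<n. norm (f (b' i) - f (a' i))) \<le> (\<Sum>i<n. norm (f (lb i) - f (la i)) + norm (f (rb i) - f (ra i)))"
      by (intro sum_mono) auto
    also have "\<dots> < e/2 + e/2"
      unfolding sum.distrib by (intro add_strict_mono H1[OF ab1 dj1 s1] H2[OF ab2 dj2 s2])
    finally show "(\<Sum>i<n. norm (f (b' i) - f (a' i))) < e" by simp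
  qed
qed

lemma ac_shift:
  assumes f: "abs_cont_on {a..b} f"
  shows "abs_cont_on {a-h..b-h} (\<lambda>t. f (t + h))"
proof (rule ac_I)
  fix e :: real assume e: "e > 0"
  obtain d where d: "d > 0" and H: "\<And>n::nat. \<And>a' b'. \<forall>i<n. a' i \<in> {a..b} \<and> b' i \<in> {a..b} \<and> a' i \<le> b' i \<Longrightarrow>
        disjoint_family_on (\<lambda>i. {a' i<..<b' i}) {..<n} \<Longrightarrow> (\<Sum>i<n. b' i - a' i) < d
        \<Longrightarrow> (\<Sum>i<n. norm (f (b' i) - f (a' i))) < e"
    using ac_D[OF f e] by auto
  show "\<exists>d>0. \<forall>n::nat. \<forall>a' b'. (\<forall>i<n. a' i \<in> {a-h..b-h} \<and> b' i \<in> {a-h..b-h} \<and> a' i \<le> b' i) \<longrightarrow>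
        disjoint_family_on (\<lambda>i. {a' i<..<b' i}) {..<n} \<longrightarrow> (\<Sum>i<n. b' i - a' i) < d
        \<longrightarrow> (\<Sum>i<n. norm (f (b' i + h) - f (a' i + h))) < e"
  proof (intro exI[of _ d] conjI allI impI)
    fix n :: nat and a' b' assume ab: "\<forall>i<n. a' i \<in> {a-h..b-h} \<and> b' i \<in> {a-h..b-h} \<and> a' i \<le> b' i"
      and dj: "disjoint_family_on (\<lambda>i. {a' i<..<b' i}) {..<n}"
      and s: "(\<Sum>i<n. b' i - a' i) < d"
    have ab': "\<forall>i<n. a' i + h \<in> {a..b} \<and> b' i + h \<in> {a..b} \<and> a' i + h \<le> b' i + h"
      using ab by auto
    have dj': "disjoint_family_on (\<lambda>i. {a' i + h<..<b' i + h}) {..<n}"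
      unfolding disjoint_family_on_def
    proof (intro ballI impI)
      fix i j assume ij: "i \<in> {..<n}" "j \<in> {..<n}" "i \<noteq> j"
      have "{a' i<..<b' i} \<inter> {a' j<..<b' j} = {}" using dj ij unfolding disjoint_family_on_def by blast
      then show "{a' i + h<..<b' i + h} \<inter> {a' j + h<..<b' j + h} = {}"
      proof (auto simp: set_eq_iff)
        fix x assume "\<forall>x<b' i. a' j < x \<longrightarrow> a' i < x \<longrightarrow> \<not> x < b' j" "x < b' i + h"
          "a' j + h < x" "a' i + h < x" "x < b' j + h"
        then show False by (metis add_less_cancel_right diff_add_cancel)
      qed
    qed
    have s': "(\<Sum>i<n. (b' i + h) - (a' i + h)) < d" using s by simp
    show "(\<Sum>i<n. norm (f (b' i + h) - f (a' i + h))) < e"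
      using H[OF ab' dj' s'] .
  qed (rule d)
qed


lemma zero_deriv_image_negligible:
  fixes h :: "real \<Rightarrow> real"
  assumes der: "\<And>t. t \<in> S \<Longrightarrow> (h has_real_derivative 0) (at t within S)"
  shows "negligible (h ` S)"
proof -
  let ?H = "\<lambda>v::real^1. vec (h (v$1)) :: real^1"
  have d: "(?H has_derivative (\<lambda>w. 0)) (at v within vec ` S)" if v: "v \<in> vec ` S" for v
  proof -
    obtain t where t: "t \<in> S" "v = vec t" using v by blast
    have "(h has_derivative (\<lambda>x. x * 0)) (at t within S)"
    proof -
      have "(\<lambda>x::real. x * 0) = (*) 0" by (simp add: fun_eq_iff)
      then show ?thesis using der[OF t(1)] by (simp add: has_field_derivative_def)
    qed
    moreover have "((*\<^sub>R) 0 :: real^1 \<Rightarrow> real^1) = (\<lambda>w. 0)" by (simp add: fun_eq_iff)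
    ultimately show ?thesis using has_derivative_vector_1[of h "\<lambda>_. 0" t S] t by simp
  qed
  have m0: "matrix (\<lambda>w::real^1. 0::real^1) = 0" by (simp add: matrix_def vec_eq_iff)
  have neg: "negligible (?H ` vec ` S)"
    by (rule baby_Sard[OF _ d]) (auto simp: m0 rank_0)
  have dif: "(\<lambda>v::real^1. v$1) differentiable_on (?H ` vec ` S)"
    by (simp add: bounded_linear_imp_differentiable_on bounded_linear_vec_nth)
  have "negligible ((\<lambda>v::real^1. v$1) ` (?H ` vec ` S))"
    by (rule negligible_differentiable_image_negligible[OF _ neg dif]) simp
  moreover have "(\<lambda>v::real^1. v$1) ` (?H ` vec ` S) = h ` S"
    by (auto simp: image_comp o_def image_iff)
  ultimately show ?thesis by simp
qed

lemma ac_sum_bound: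
  fixes h :: "real \<Rightarrow> real" and p q :: "'c \<Rightarrow> real"
  assumes H: "\<And>n::nat. \<And>a' b'. \<forall>i<n. a' i \<in> {a..b} \<and> b' i \<in> {a..b} \<and> a' i \<le> b' i \<Longrightarrow>
        disjoint_family_on (\<lambda>i. {a' i<..<b' i}) {..<n} \<Longrightarrow> (\<Sum>i<n. b' i - a' i) < d
        \<Longrightarrow> (\<Sum>i<n. norm (h (b' i) - h (a' i))) < e"
   and F: "finite F"
   and pq: "\<And>C. C \<in> F \<Longrightarrow> p C \<in> {a..b} \<and> q C \<in> {a..b} \<and> p C \<le> q C"
   and dj: "\<And>C D. C \<in> F \<Longrightarrow> D \<in> F \<Longrightarrow> C \<noteq> D \<Longrightarrow> {p C<..<q C} \<inter> {p D<..<q D} = {}"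
   and s: "(\<Sum>C\<in>F. q C - p C) < d"
  shows "(\<Sum>C\<in>F. \<bar>h (q C) - h (p C)\<bar>) < e"
proof -
  obtain g where g: "bij_betw g {0..<card F} F" using ex_bij_betw_nat_finite[OF F] by blast
  then have g': "bij_betw g {..<card F} F" by (simp add: atLeast0LessThan)
  have "(\<Sum>i<card F. norm (h ((q \<circ> g) i) - h ((p \<circ> g) i))) < e"
  proof (rule H)
    show "\<forall>i<card F. (p \<circ> g) i \<in> {a..b} \<and> (q \<circ> g) i \<in> {a..b} \<and> (p \<circ> g) i \<le> (q \<circ> g) i"
      using pq g' by (auto simp: bij_betw_def)
    show "disjoint_family_on (\<lambda>i. {(p \<circ> g) i<..<(q \<circ> g) i}) {..<card F}"
      unfolding disjoint_family_on_def
    proof (intro ballI impI)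
      fix i j assume "i \<in> {..<card F}" "j \<in> {..<card F}" "i \<noteq> j"
      then have "g i \<in> F" "g j \<in> F" "g i \<noteq> g j" using g' by (auto simp: bij_betw_def inj_on_def)
      then show "{(p \<circ> g) i<..<(q \<circ> g) i} \<inter> {(p \<circ> g) j<..<(q \<circ> g) j} = {}" using dj by simp
    qed
    show "(\<Sum>i<card F. (q \<circ> g) i - (p \<circ> g) i) < d"
      using s sum.reindex_bij_betw[OF g', of "\<lambda>C. q C - p C"] by simp
  qed
  then show ?thesis
    using sum.reindex_bij_betw[OF g', of "\<lambda>C. \<bar>h (q C) - h (p C)\<bar>"] by simp
qed

lemma component_interval:
  fixes C U :: "real set"
  assumes C: "C \<in> components U" and U: "U \<subseteq> {a<..<b}"
  shows "{Inf C<..<Sup C} \<subseteq> C" "C \<subseteq> {Inf C..Sup C}" "a \<le> Inf C" "Sup C \<le> b" "Inf C \<le> Sup C"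
proof -
  have ne: "C \<noteq> {}" using C in_components_nonempty by blast
  have sub: "C \<subseteq> {a<..<b}" using in_components_subset[OF C] U by blast
  have bb1: "bdd_below C" using sub unfolding bdd_below_def by (intro exI[of _ a]) auto
  have bb2: "bdd_above C" using sub unfolding bdd_above_def by (intro exI[of _ b]) auto
  note bb = bb1 bb2
  have conn: "connected C" using in_components_connected[OF C] .
  show "C \<subseteq> {Inf C..Sup C}" using bb by (auto intro: cInf_lower cSup_upper)
  show "{Inf C<..<Sup C} \<subseteq> C"
  proof
    fix t assume t: "t \<in> {Inf C<..<Sup C}"
    obtain c1 where c1: "c1 \<in> C" "c1 < t" using t cInf_less_iff[OF ne bb(1)] by auto
    obtain c2 where c2: "c2 \<in> C" "t < c2" using t less_cSup_iff[OF ne bb(2)] by auto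
    show "t \<in> C" using connected_contains_Icc[OF conn c1(1) c2(1)] c1 c2 by auto
  qed
  show "a \<le> Inf C" using sub ne by (intro cInf_greatest) auto
  show "Sup C \<le> b" using sub ne by (intro cSup_least) auto
  show "Inf C \<le> Sup C" using ne bb by (meson cInf_le_cSup)
qed

lemma ac_luzin:
  fixes h :: "real \<Rightarrow> real"
  assumes ac: "abs_cont_on {a..b} h" and N: "negligible N" and Nab: "N \<subseteq> {a..b}"
  shows "negligible (h ` N)"
  unfolding negligible_outer_le
proof (intro allI impI)
  fix e :: real assume e: "e > 0"
  have cont: "continuous_on {a..b} h" using ac_cont[OF ac] .
  obtain d where d: "d > 0" and H: "\<And>n::nat. \<And>a' b'. \<forall>i<n. a' i \<in> {a..b} \<and> b' i \<in> {a..b} \<and> a' i \<le> b' i \<Longrightarrow>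
        disjoint_family_on (\<lambda>i. {a' i<..<b' i}) {..<n} \<Longrightarrow> (\<Sum>i<n. b' i - a' i) < d
        \<Longrightarrow> (\<Sum>i<n. norm (h (b' i) - h (a' i))) < e/2"
    using ac_D[OF ac, of "e/2"] e by auto
  have Nl: "N \<in> sets lebesgue" using N by (simp add: negligible_iff_null_sets null_setsD2)
  obtain U where U: "open U" "N \<subseteq> U" "U - N \<in> lmeasurable" "emeasure lebesgue (U - N) < ennreal d"
    using sets_lebesgue_outer_open[OF Nl d] by blast
  have mUN: "measure lebesgue (U - N) < d"
    using U(3,4) d by (simp add: emeasure_eq_measure2 ennreal_less_iff)
  define V where "V = U \<inter> {a<..<b}"
  have Vsub: "V \<subseteq> {a<..<b}" unfolding V_def by auto
  have Vo: "open V" unfolding V_def using U(1) by auto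
  have Vl: "V \<in> lmeasurable" using Vo Vsub by (intro lmeasurable_open) (auto intro: bounded_subset[of "{a<..<b}"])
  have Nl': "N \<in> lmeasurable" using N by (simp add: negligible_imp_measurable)
  have "measure lebesgue V \<le> measure lebesgue ((U - N) \<union> N)"
  proof (rule measure_mono_fmeasurable)
    show "V \<subseteq> (U - N) \<union> N" by (auto simp: V_def)
    show "V \<in> sets lebesgue" using Vl by auto
    show "(U - N) \<union> N \<in> fmeasurable lebesgue" using U(3) Nl' by (rule fmeasurable.Un)
  qed
  also have "\<dots> \<le> measure lebesgue (U - N) + measure lebesgue N"
    by (rule measure_Un_le) (use U(3) Nl' in auto)
  also have "\<dots> < d" using mUN negligible_imp_measure0[OF N] by simp
  finally have mV: "measure lebesgue V < d" .
  let ?C = "components V"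
  have cnt: "countable ?C"
  proof (rule countable_disjoint_open_subsets)
    show "open S" if "S \<in> ?C" for S using open_components[OF Vo that] .
    show "pairwise disjnt ?C" using pairwise_disjoint_components[of V]
      by (simp add: pairwise_def disjnt_def)
  qed
  note ci = component_interval[OF _ Vsub]
  have "\<forall>C\<in>?C. \<exists>PQ. fst PQ \<in> {Inf C..Sup C} \<and> snd PQ \<in> {Inf C..Sup C} \<and> h ` {Inf C..Sup C} = {h (fst PQ)..h (snd PQ)}"
  proof
    fix C assume C: "C \<in> ?C"
    have sub: "{Inf C..Sup C} \<subseteq> {a..b}" using ci(3,4)[OF C] by auto
    obtain c1 c2 where c: "h ` {Inf C..Sup C} = {c1..c2}" "c1 \<le> c2"
      using continuous_image_closed_interval[OF ci(5)[OF C] continuous_on_subset[OF cont sub]] by blast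
    then have "c1 \<in> h ` {Inf C..Sup C}" "c2 \<in> h ` {Inf C..Sup C}" by auto
    then obtain p q where "p \<in> {Inf C..Sup C}" "q \<in> {Inf C..Sup C}" "h p = c1" "h q = c2" by blast
    then show "\<exists>PQ. fst PQ \<in> {Inf C..Sup C} \<and> snd PQ \<in> {Inf C..Sup C} \<and> h ` {Inf C..Sup C} = {h (fst PQ)..h (snd PQ)}"
      using c by (intro exI[of _ "(p,q)"]) auto
  qed
  then obtain PQ where PQ: "\<And>C. C \<in> ?C \<Longrightarrow> fst (PQ C) \<in> {Inf C..Sup C} \<and> snd (PQ C) \<in> {Inf C..Sup C} \<and>
      h ` {Inf C..Sup C} = {h (fst (PQ C))..h (snd (PQ C))}"
    by metis
  define I where "I C = h ` {Inf C..Sup C}" for C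
  define p where "p C = min (fst (PQ C)) (snd (PQ C))" for C
  define q where "q C = max (fst (PQ C)) (snd (PQ C))" for C
  have Il: "I C \<in> lmeasurable" if "C \<in> ?C" for C
    using PQ[OF that] by (simp add: I_def)
  have mI: "measure lebesgue (I C) = \<bar>h (q C) - h (p C)\<bar>" if C: "C \<in> ?C" for C
  proof -
    have "h ` {Inf C..Sup C} \<noteq> {}" using ci(5)[OF C] by auto
    then have le: "h (fst (PQ C)) \<le> h (snd (PQ C))" using PQ[OF C] by auto
    then show ?thesis using PQ[OF C]
      by (auto simp: I_def p_def q_def min_def max_def)
  qed
  have fin: "(\<Sum>C\<in>F. measure lebesgue (I C)) < e/2" if F: "finite F" "F \<subseteq> ?C" for F
  proof -
    have "(\<Sum>C\<in>F. \<bar>h (q C) - h (p C)\<bar>) < e/2"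
    proof (rule ac_sum_bound[OF H F(1)])
      show "p C \<in> {a..b} \<and> q C \<in> {a..b} \<and> p C \<le> q C" if "C \<in> F" for C
      proof -
        have "C \<in> ?C" using that F(2) by blast
        then show ?thesis using PQ[of C] ci(3,4)[of C] by (auto simp: p_def q_def min_def max_def)
      qed
      have sub: "{p C<..<q C} \<subseteq> C" if "C \<in> F" for C
      proof -
        have CC: "C \<in> ?C" using that F(2) by blast
        have "{p C<..<q C} \<subseteq> {Inf C<..<Sup C}" using PQ[OF CC] by (auto simp: p_def q_def)
        then show ?thesis using ci(1)[of C] that F(2) by blast
      qed
      show "{p C<..<q C} \<inter> {p D<..<q D} = {}" if "C \<in> F" "D \<in> F" "C \<noteq> D" for C D
      proof -
        have "C \<inter> D = {}" using pairwise_disjoint_components[of V] that F(2)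
          unfolding pairwise_def by blast
        then show ?thesis using sub that by blast
      qed
      have "(\<Sum>C\<in>F. q C - p C) \<le> (\<Sum>C\<in>F. Sup C - Inf C)"
      proof (rule sum_mono)
        fix C assume "C \<in> F"
        then have CC: "C \<in> ?C" using F(2) by blast
        show "q C - p C \<le> Sup C - Inf C" using PQ[OF CC] by (auto simp: p_def q_def)
      qed
      also have "\<dots> = (\<Sum>C\<in>F. measure lebesgue {Inf C<..<Sup C})"
        by (rule sum.cong) (use ci(5) F(2) in auto)
      also have "\<dots> = measure lebesgue (\<Union>C\<in>F. {Inf C<..<Sup C})"
      proof (rule measure_UNION'[symmetric, OF F(1)])
        show "{Inf C<..<Sup C} \<in> fmeasurable lebesgue" if "C \<in> F" for C by simp
        show "pairwise (\<lambda>i j. disjnt {Inf i<..<Sup i} {Inf j<..<Sup j}) F"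
          unfolding pairwise_def disjnt_def
        proof (intro ballI impI)
          fix C D assume "C \<in> F" "D \<in> F" "C \<noteq> D"
          moreover have "C \<inter> D = {}" using pairwise_disjoint_components[of V] calculation F(2)
            unfolding pairwise_def by blast
          ultimately show "{Inf C<..<Sup C} \<inter> {Inf D<..<Sup D} = {}" using ci(1)[of C] ci(1)[of D] F(2) by blast
        qed
      qed
      also have "\<dots> \<le> measure lebesgue V"
      proof (rule measure_mono_fmeasurable)
        show "(\<Union>C\<in>F. {Inf C<..<Sup C}) \<subseteq> V"
          using ci(1) F(2) in_components_subset by blast
        show "(\<Union>C\<in>F. {Inf C<..<Sup C}) \<in> sets lebesgue" using F(1) by auto
      qed (rule Vl)
      finally show "(\<Sum>C\<in>F. q C - p C) < d" using mV by simp
    qed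
    then show ?thesis using mI F(2) by (simp add: subset_iff)
  qed
  define T where "T = (\<Union>C\<in>?C. I C) \<union> {h a, h b}"
  have hN: "h ` N \<subseteq> T"
  proof
    fix y assume "y \<in> h ` N"
    then obtain t where t: "t \<in> N" "y = h t" by blast
    show "y \<in> T"
    proof (cases "t = a \<or> t = b")
      case True then show ?thesis using t by (auto simp: T_def)
    next
      case False
      then have "t \<in> V" using t Nab U(2) by (auto simp: V_def)
      then obtain C where C: "C \<in> ?C" "t \<in> C" using Union_components[of V] by blast
      then have "t \<in> {Inf C..Sup C}" using ci(2) by blast
      then have "h t \<in> I C" by (simp add: I_def)
      then show ?thesis using C t unfolding T_def by blast
    qed
  qed
  have UC: "(\<Union>C\<in>?C. I C) \<in> lmeasurable \<and> measure lebesgue (\<Union>C\<in>?C. I C) \<le> e/2"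
  proof (cases "?C = {}")
    case True then show ?thesis using e by simp
  next
    case False
    define S where "S i = I (from_nat_into ?C i)" for i
    have eqU: "(\<Union>C\<in>?C. I C) = (\<Union>i. S i)"
      unfolding S_def using range_from_nat_into[OF False cnt]
      by (metis image_image)
    have Sm: "S i \<in> fmeasurable lebesgue" for i
      unfolding S_def using Il from_nat_into[OF False] by blast
    have B: "measure lebesgue (\<Union>i\<le>n. S i) \<le> e/2" for n
    proof -
      let ?F = "from_nat_into ?C ` {..n}"
      have F: "finite ?F" "?F \<subseteq> ?C" using from_nat_into[OF False] by auto
      have "(\<Union>i\<le>n. S i) = (\<Union>C\<in>?F. I C)" unfolding S_def by auto
      moreover have "measure lebesgue (\<Union>C\<in>?F. I C) \<le> (\<Sum>C\<in>?F. measure lebesgue (I C))"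
      proof (rule measure_UNION_le[OF F(1)])
        fix C assume "C \<in> ?F"
        then have "C \<in> ?C" using F(2) by blast
        then show "I C \<in> sets lebesgue" using Il by blast
      qed
      ultimately have "measure lebesgue (\<Union>i\<le>n. S i) \<le> (\<Sum>C\<in>?F. measure lebesgue (I C))" by simp
      also have "\<dots> < e/2" using fin[OF F] .
      finally show ?thesis by simp
    qed
    show ?thesis unfolding eqU using fmeasurable_countable_Union[OF Sm B] measure_countable_Union_le[OF Sm B]
      by simp
  qed
  have "{h a, h b} \<in> lmeasurable" by (simp add: negligible_imp_measurable)
  then have "T \<in> lmeasurable" unfolding T_def using UC by (intro fmeasurable.Un) auto
  moreover have "measure lebesgue T \<le> e"
  proof -
    have "measure lebesgue T \<le> measure lebesgue (\<Union>C\<in>?C. I C) + measure lebesgue {h a, h b}"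
      unfolding T_def by (rule measure_Un_le) (use UC in auto)
    also have "measure lebesgue {h a, h b} = 0" by (rule negligible_imp_measure0) simp
    finally show ?thesis using UC e by simp
  qed
  ultimately show "\<exists>T. h ` N \<subseteq> T \<and> T \<in> lmeasurable \<and> measure lebesgue T \<le> e"
    using hN by blast
qed


lemma ac_deriv0_const:
  fixes h :: "real \<Rightarrow> real"
  assumes ac: "abs_cont_on {a..b} h" and N: "negligible N"
   and der: "\<And>t. t \<in> {a..b} - N \<Longrightarrow> (h has_real_derivative 0) (at t within {a..b})"
   and t: "t \<in> {a..b}"
  shows "h t = h a"
proof (rule ccontr)
  assume ne: "h t \<noteq> h a"
  have cont: "continuous_on {a..b} h" using ac_cont[OF ac] .
  have n1: "negligible (h ` ({a..b} - N))"
    by (rule zero_deriv_image_negligible) (use der in \<open>auto intro: DERIV_subset\<close>)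
  have n2: "negligible (h ` (N \<inter> {a..b}))"
    by (rule ac_luzin[OF ac]) (use N in \<open>auto intro: negligible_subset\<close>)
  have "h ` {a..b} = h ` ({a..b} - N) \<union> h ` (N \<inter> {a..b})" by auto
  then have neg: "negligible (h ` {a..b})" using n1 n2 by simp
  have a: "a \<in> {a..b}" using t by auto
  have conn: "connected (h ` {a..b})" by (rule connected_continuous_image[OF cont]) simp
  have sub: "{min (h t) (h a)..max (h t) (h a)} \<subseteq> h ` {a..b}"
    by (rule connected_contains_Icc[OF conn]) (use t a in \<open>auto simp: min_def max_def\<close>)
  have "negligible {min (h t) (h a)..max (h t) (h a)}" using negligible_subset[OF neg sub] .
  then have "box (min (h t) (h a)) (max (h t) (h a)) = {}"
    using negligible_interval(1)[of "min (h t) (h a)" "max (h t) (h a)"] by (simp add: cbox_interval)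
  then show False using ne by (auto simp: box_real min_def max_def split: if_splits)
qed

lemma ac_fundamental:
  fixes f G g :: "real \<Rightarrow> real"
  assumes ac: "abs_cont_on {a..b} f" and N: "negligible N"
   and df: "\<And>t. t \<in> {a..b} - N \<Longrightarrow> (f has_real_derivative g t) (at t within {a..b})"
   and dG: "\<And>t. t \<in> {a..b} \<Longrightarrow> (G has_real_derivative g t) (at t within {a..b})"
   and B: "\<And>t. t \<in> {a..b} \<Longrightarrow> \<bar>g t\<bar> \<le> B"
   and t: "t \<in> {a..b}"
  shows "f t - f a = G t - G a"
proof -
  have B0: "0 \<le> B" using B[OF t] by linarith
  have lip: "norm (G x - G y) \<le> B * \<bar>x - y\<bar>" if "x \<in> {a..b}" "y \<in> {a..b}" for x y
    using field_differentiable_bound[OF convex_real_interval(5) dG, of B x y] B that by auto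
  have acG: "abs_cont_on {a..b} G" by (rule ac_lip[OF B0 lip])
  have "(\<lambda>s. f s - G s) t = (\<lambda>s. f s - G s) a"
  proof (rule ac_deriv0_const[OF ac_diff[OF ac acG] N _ t])
    fix s assume s: "s \<in> {a..b} - N"
    show "((\<lambda>s. f s - G s) has_real_derivative 0) (at s within {a..b})"
      using DERIV_diff[OF df[OF s] dG] s by simp
  qed
  then show ?thesis by simp
qed


lemma hvd_fst: "(f has_vector_derivative v) F \<Longrightarrow> ((\<lambda>t. fst (f t)) has_vector_derivative fst v) F"
  unfolding has_vector_derivative_def by (drule has_derivative_fst) simp

lemma hvd_snd: "(f has_vector_derivative v) F \<Longrightarrow> ((\<lambda>t. snd (f t)) has_vector_derivative snd v) F"
  unfolding has_vector_derivative_def by (drule has_derivative_snd) simp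

lemma AE_negligible:
  assumes "AE t in lebesgue. P t"
  obtains N where "negligible N" "\<And>t. t \<notin> N \<Longrightarrow> P t"
proof -
  from AE_E3[OF assms] obtain N where "\<And>x. x \<in> space lebesgue - N \<Longrightarrow> P x" "N \<in> null_sets lebesgue"
    by metis
  then show ?thesis using that[of N] by (auto simp: negligible_iff_null_sets)
qed

lemma dense_zero:
  fixes f :: "real \<Rightarrow> real"
  assumes cont: "continuous_on {a..b} f" and ab: "a < b" and N: "negligible N"
    and z: "\<And>t. t \<in> {a..b} - N \<Longrightarrow> f t = 0" and t: "t \<in> {a..b}"
  shows "f t = 0"
proof (rule ccontr)
  assume ne: "f t \<noteq> 0"
  obtain d where d: "d > 0" and H: "\<And>s. s \<in> {a..b} \<Longrightarrow> dist s t < d \<Longrightarrow> dist (f s) (f t) < \<bar>f t\<bar>"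
    using cont t ne unfolding continuous_on_iff by (metis zero_less_abs_iff)
  define J where "J = {max a (t - d)<..<min b (t + d)}"
  have "\<not> negligible J" unfolding J_def using ab d t
    by (subst box_real(1)[symmetric], subst negligible_interval(2)) (auto simp: box_real)
  then have "\<not> J \<subseteq> N" using N negligible_subset by blast
  then obtain s where s: "s \<in> J" "s \<notin> N" by blast
  then have "s \<in> {a..b}" "dist s t < d" unfolding J_def by (auto simp: dist_real_def)
  then have "dist (f s) (f t) < \<bar>f t\<bar>" using H by blast
  moreover have "f s = 0" using z s \<open>s \<in> {a..b}\<close> by blast
  ultimately show False by (simp add: dist_real_def)
qed

definition good :: "real \<Rightarrow> (real \<Rightarrow> real \<times> real) \<Rightarrow> (real \<Rightarrow> real \<times> real) \<Rightarrow> (real \<Rightarrow> real \<times> real) \<Rightarrow> real \<Rightarrow> real \<Rightarrow> bool" where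
 "good T lam \<gamma> u K t \<longleftrightarrow> \<bar>fst (u t)\<bar> \<le> 1 \<and> \<bar>snd (u t)\<bar> \<le> 1 \<and>
    (\<gamma> has_vector_derivative (fst (u t), snd (u t) * fst (\<gamma> t))) (at t within {0..T}) \<and>
    (lam has_vector_derivative (-(snd (u t) * snd (lam t)), 0)) (at t within {0..T}) \<and>
    fst (u t) * fst (lam t) + snd (u t) * (snd (lam t) * fst (\<gamma> t)) = \<bar>fst (lam t)\<bar> + \<bar>snd (lam t) * fst (\<gamma> t)\<bar> \<and>
    \<bar>fst (lam t)\<bar> + \<bar>snd (lam t) * fst (\<gamma> t)\<bar> = K"

lemma extremal_good:
  assumes "extremal_pair T lam \<gamma> u"
  shows "\<exists>K\<ge>0. \<exists>N. negligible N \<and> (\<forall>t\<in>{0..T}-N. good T lam \<gamma> u K t)"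
proof -
  have adm: "admissible T \<gamma> u" using assms by (simp add: extremal_pair_def)
  obtain K where K: "K \<ge> 0" and KA: "AE t in lebesgue. t \<in> {0..T} \<longrightarrow>
        Ham (lam t) (\<gamma> t) (u t) = \<bar>lam t \<bullet> X1 (\<gamma> t)\<bar> + \<bar>lam t \<bullet> X2 (\<gamma> t)\<bar> \<and>
        \<bar>lam t \<bullet> X1 (\<gamma> t)\<bar> + \<bar>lam t \<bullet> X2 (\<gamma> t)\<bar> = K"
    using assms unfolding extremal_pair_def by blast
  have A1: "AE t in lebesgue. t \<in> {0..T} \<longrightarrow> \<bar>fst (u t)\<bar> \<le> 1 \<and> \<bar>snd (u t)\<bar> \<le> 1"
    using adm by (simp add: admissible_def)
  have A2: "AE t in lebesgue. t \<in> {0..T} \<longrightarrow>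
        (lam has_vector_derivative (- (snd (u t) * snd (lam t)), 0)) (at t within {0..T}) \<and>
        (\<gamma> has_vector_derivative (fst (u t) *\<^sub>R X1 (\<gamma> t) + snd (u t) *\<^sub>R X2 (\<gamma> t))) (at t within {0..T})"
    using assms by (simp add: extremal_pair_def)
  have "AE t in lebesgue. t \<in> {0..T} \<longrightarrow> good T lam \<gamma> u K t"
    using A1 A2 KA
    by eventually_elim (auto simp: good_def Ham_def X1_def X2_def inner_prod_def)
  then obtain N where "negligible N" "\<And>t. t \<notin> N \<Longrightarrow> t \<in> {0..T} \<longrightarrow> good T lam \<gamma> u K t"
    by (erule AE_negligible)
  then show ?thesis using K by blast
qed


lemma sgn_const:
  fixes f :: "real \<Rightarrow> real"
  assumes cont: "continuous_on S f" and conn: "connected S" and nz: "\<And>t. t \<in> S \<Longrightarrow> f t \<noteq> 0"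
    and s: "s \<in> S" and t: "t \<in> S"
  shows "sgn (f s) = sgn (f t)"
proof (rule ccontr)
  assume ne: "sgn (f s) \<noteq> sgn (f t)"
  have c: "connected (f ` S)" using connected_continuous_image[OF cont conn] .
  have "0 \<in> f ` S"
  proof (cases "f s < f t")
    case True
    then have "{f s..f t} \<subseteq> f ` S" using connected_contains_Icc[OF c] s t by blast
    moreover have "f s \<le> 0" "0 \<le> f t" using ne nz[OF s] nz[OF t] True
      by (auto simp: sgn_real_def split: if_splits)
    ultimately show ?thesis by auto
  next
    case False
    then have "{f t..f s} \<subseteq> f ` S" using connected_contains_Icc[OF c] s t by simp
    moreover have "f t \<le> 0" "0 \<le> f s" using ne nz[OF s] nz[OF t] False
      by (auto simp: sgn_real_def split: if_splits)
    ultimately show ?thesis by auto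
  qed
  then show False using nz by auto
qed

locale ctx =
  fixes T K :: real and lam \<gamma> u :: "real \<Rightarrow> real \<times> real" and N :: "real set"
  assumes T: "0 < T" and acg: "abs_cont_on {0..T} \<gamma>" and acl: "abs_cont_on {0..T} lam"
    and N: "negligible N" and good: "\<And>t. t \<in> {0..T} - N \<Longrightarrow> good T lam \<gamma> u K t"
begin

definition "c = snd (lam 0)"

lemma acx: "abs_cont_on {0..T} (\<lambda>t. fst (\<gamma> t))"
  by (rule ac_comp[OF acg]) (metis fst_diff norm_fst_le)
lemma acy: "abs_cont_on {0..T} (\<lambda>t. snd (\<gamma> t))"
  by (rule ac_comp[OF acg]) (metis snd_diff norm_snd_le)
lemma acp: "abs_cont_on {0..T} (\<lambda>t. fst (lam t))"
  by (rule ac_comp[OF acl]) (metis fst_diff norm_fst_le)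
lemma acq: "abs_cont_on {0..T} (\<lambda>t. snd (lam t))"
  by (rule ac_comp[OF acl]) (metis snd_diff norm_snd_le)

lemma contx: "continuous_on {0..T} (\<lambda>t. fst (\<gamma> t))" using ac_cont[OF acx] .
lemma conty: "continuous_on {0..T} (\<lambda>t. snd (\<gamma> t))" using ac_cont[OF acy] .
lemma contp: "continuous_on {0..T} (\<lambda>t. fst (lam t))" using ac_cont[OF acp] .
lemma contq: "continuous_on {0..T} (\<lambda>t. snd (lam t))" using ac_cont[OF acq] .

lemma q_const: assumes "t \<in> {0..T}" shows "snd (lam t) = c"
proof -
  have "(\<lambda>s. snd (lam s)) t = (\<lambda>s. snd (lam s)) 0"
  proof (rule ac_deriv0_const[OF acq N _ assms])
    fix s assume s: "s \<in> {0..T} - N"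
    then have "(lam has_vector_derivative (-(snd (u s) * snd (lam s)), 0)) (at s within {0..T})"
      using good[OF s] by (simp add: good_def)
    from hvd_snd[OF this] show "((\<lambda>s. snd (lam s)) has_real_derivative 0) (at s within {0..T})"
      by (simp add: has_real_derivative_iff_has_vector_derivative)
  qed
  then show ?thesis by (simp add: c_def)
qed

lemma inv: assumes t: "t \<in> {0..T}" shows "\<bar>fst (lam t)\<bar> + \<bar>c * fst (\<gamma> t)\<bar> = K"
proof -
  have "(\<lambda>s. \<bar>fst (lam s)\<bar> + \<bar>c * fst (\<gamma> s)\<bar> - K) t = 0"
  proof (rule dense_zero[OF _ T N _ t])
    show "continuous_on {0..T} (\<lambda>s. \<bar>fst (lam s)\<bar> + \<bar>c * fst (\<gamma> s)\<bar> - K)"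
      by (intro continuous_intros contp contx)
    fix s assume s: "s \<in> {0..T} - N"
    then show "\<bar>fst (lam s)\<bar> + \<bar>c * fst (\<gamma> s)\<bar> - K = 0"
      using good[OF s] q_const[of s] by (simp add: good_def)
  qed
  then show ?thesis by simp
qed

lemma ctl1: assumes t: "t \<in> {0..T} - N" and p: "fst (lam t) \<noteq> 0"
  shows "fst (u t) = sgn (fst (lam t))"
proof -
  define u1 where "u1 = fst (u t)" define u2 where "u2 = snd (u t)"
  define pp where "pp = fst (lam t)" define w where "w = c * fst (\<gamma> t)"
  have g: "\<bar>u1\<bar> \<le> 1" "\<bar>u2\<bar> \<le> 1" "u1 * pp + u2 * w = \<bar>pp\<bar> + \<bar>w\<bar>"
    using good[OF t] q_const[of t] t by (auto simp: good_def u1_def u2_def pp_def w_def)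
  have "u1 * pp \<le> \<bar>pp\<bar>"
    using abs_mult[of u1 pp] mult_right_mono[OF g(1) abs_ge_zero[of pp]] abs_ge_self[of "u1*pp"] by linarith
  moreover have "u2 * w \<le> \<bar>w\<bar>"
    using abs_mult[of u2 w] mult_right_mono[OF g(2) abs_ge_zero[of w]] abs_ge_self[of "u2*w"] by linarith
  ultimately have e: "u1 * pp = \<bar>pp\<bar>" using g(3) by linarith
  have "u1 = sgn pp"
  proof (cases "pp > 0")
    case True
    then have "u1 * pp = 1 * pp" using e by simp
    then show ?thesis using True by (simp add: sgn_real_def)
  next
    case False
    then have "pp < 0" using p pp_def by simp
    then have "u1 * pp = (-1) * pp" using e by simp
    then have "u1 = -1" using mult_right_cancel[of pp u1 "-1"] \<open>pp < 0\<close> by simp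
    then show ?thesis using \<open>pp < 0\<close> by (simp add: sgn_real_def)
  qed
  then show ?thesis by (simp add: u1_def pp_def)
qed

lemma ctl2: assumes t: "t \<in> {0..T} - N" and x: "c * fst (\<gamma> t) \<noteq> 0"
  shows "snd (u t) = sgn (c * fst (\<gamma> t))"
proof -
  define u1 where "u1 = fst (u t)" define u2 where "u2 = snd (u t)"
  define pp where "pp = fst (lam t)" define w where "w = c * fst (\<gamma> t)"
  have g: "\<bar>u1\<bar> \<le> 1" "\<bar>u2\<bar> \<le> 1" "u1 * pp + u2 * w = \<bar>pp\<bar> + \<bar>w\<bar>"
    using good[OF t] q_const[of t] t by (auto simp: good_def u1_def u2_def pp_def w_def)
  have "u1 * pp \<le> \<bar>pp\<bar>"
    using abs_mult[of u1 pp] mult_right_mono[OF g(1) abs_ge_zero[of pp]] abs_ge_self[of "u1*pp"] by linarith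
  moreover have "u2 * w \<le> \<bar>w\<bar>"
    using abs_mult[of u2 w] mult_right_mono[OF g(2) abs_ge_zero[of w]] abs_ge_self[of "u2*w"] by linarith
  ultimately have e: "u2 * w = \<bar>w\<bar>" using g(3) by linarith
  have "u2 = sgn w"
  proof (cases "w > 0")
    case True
    then have "u2 * w = 1 * w" using e by simp
    then show ?thesis using True by (simp add: sgn_real_def)
  next
    case False
    have "w \<noteq> 0" using x w_def by simp
    then have "w < 0" using False by linarith
    then have "u2 * w = (-1) * w" using e by simp
    then have "u2 = -1" using mult_right_cancel[of w u2 "-1"] \<open>w < 0\<close> by simp
    then show ?thesis using \<open>w < 0\<close> by (simp add: sgn_real_def)
  qed
  then show ?thesis by (simp add: u2_def w_def)
qed

lemma gap:
  assumes ab: "0 \<le> \<alpha>" "\<alpha> < \<beta>" "\<beta> \<le> T" and c0: "c \<noteq> 0"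
    and nz0: "\<forall>t\<in>{\<alpha><..<\<beta>}. fst (lam t) \<noteq> 0 \<and> fst (\<gamma> t) \<noteq> 0"
  defines "\<sigma> \<equiv> sgn (fst (lam ((\<alpha>+\<beta>)/2)))" and "sx \<equiv> sgn (fst (\<gamma> ((\<alpha>+\<beta>)/2)))"
  shows "\<sigma> \<in> {-1,1}" "sx \<in> {-1,1}"
    "\<And>t. t \<in> {\<alpha><..<\<beta>} \<Longrightarrow> sgn (fst (lam t)) = \<sigma> \<and> sgn (fst (\<gamma> t)) = sx"
    "\<And>t. t \<in> {\<alpha>..\<beta>} \<Longrightarrow> fst (\<gamma> t) = fst (\<gamma> \<alpha>) + \<sigma> * (t - \<alpha>)"
    "\<And>t. t \<in> {\<alpha>..\<beta>} \<Longrightarrow> fst (lam t) = fst (lam \<alpha>) - \<bar>c\<bar> * sx * (t - \<alpha>)"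
    "\<And>t. t \<in> {\<alpha>..\<beta>} \<Longrightarrow> snd (\<gamma> t) = snd (\<gamma> \<alpha>) + sgn c * sx * (fst (\<gamma> \<alpha>) * (t - \<alpha>) + \<sigma> * (t - \<alpha>)^2 / 2)"
proof -
  have nz: "fst (lam t) \<noteq> 0 \<and> fst (\<gamma> t) \<noteq> 0" if "t \<in> {\<alpha><..<\<beta>}" for t using nz0 that by blast
  define m where "m = (\<alpha>+\<beta>)/2"
  have m: "m \<in> {\<alpha><..<\<beta>}" using ab by (auto simp: m_def)
  have sub: "{\<alpha>..\<beta>} \<subseteq> {0..T}" "{\<alpha><..<\<beta>} \<subseteq> {0..T}" using ab by auto
  have sp: "sgn (fst (lam t)) = \<sigma>" if t: "t \<in> {\<alpha><..<\<beta>}" for t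
    unfolding \<sigma>_def m_def[symmetric]
    by (rule sgn_const[OF continuous_on_subset[OF contp sub(2)] _ _ t m]) (use nz in auto)
  have sxx: "sgn (fst (\<gamma> t)) = sx" if t: "t \<in> {\<alpha><..<\<beta>}" for t
    unfolding sx_def m_def[symmetric]
    by (rule sgn_const[OF continuous_on_subset[OF contx sub(2)] _ _ t m]) (use nz in auto)
  show "\<sigma> \<in> {-1,1}" using nz[OF m] unfolding \<sigma>_def m_def[symmetric] by (auto simp: sgn_real_def)
  show "sx \<in> {-1,1}" using nz[OF m] unfolding sx_def m_def[symmetric] by (auto simp: sgn_real_def)
  show "\<And>t. t \<in> {\<alpha><..<\<beta>} \<Longrightarrow> sgn (fst (lam t)) = \<sigma> \<and> sgn (fst (\<gamma> t)) = sx"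
    using sp sxx by blast
  define N' where "N' = N \<union> {\<alpha>, \<beta>}"
  have N': "negligible N'" using N by (simp add: N'_def)
  have gd: "s \<in> {\<alpha><..<\<beta>}" "s \<in> {0..T} - N" if "s \<in> {\<alpha>..\<beta>} - N'" for s
    using that sub by (auto simp: N'_def)
  have u1: "fst (u s) = \<sigma>" if "s \<in> {\<alpha>..\<beta>} - N'" for s
    using ctl1[OF gd(2)[OF that]] nz[OF gd(1)[OF that]] sp[OF gd(1)[OF that]] by simp
  have u2: "snd (u s) = sgn c * sx" if "s \<in> {\<alpha>..\<beta>} - N'" for s
    using ctl2[OF gd(2)[OF that]] nz[OF gd(1)[OF that]] sxx[OF gd(1)[OF that]] c0
    by (simp add: sgn_mult)
  have dg: "(\<gamma> has_vector_derivative (\<sigma>, sgn c * sx * fst (\<gamma> s))) (at s within {\<alpha>..\<beta>})"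
    if "s \<in> {\<alpha>..\<beta>} - N'" for s
  proof -
    have "(\<gamma> has_vector_derivative (fst (u s), snd (u s) * fst (\<gamma> s))) (at s within {0..T})"
      using good[OF gd(2)[OF that]] by (simp add: good_def)
    then show ?thesis using u1[OF that] u2[OF that] has_vector_derivative_within_subset[OF _ sub(1)] by simp
  qed
  have dl: "(lam has_vector_derivative (- (\<bar>c\<bar> * sx), 0)) (at s within {\<alpha>..\<beta>})"
    if "s \<in> {\<alpha>..\<beta>} - N'" for s
  proof -
    have "(lam has_vector_derivative (-(snd (u s) * snd (lam s)), 0)) (at s within {0..T})"
      using good[OF gd(2)[OF that]] by (simp add: good_def)
    moreover have "snd (u s) * snd (lam s) = \<bar>c\<bar> * sx"
      using u2[OF that] q_const[of s] gd(2)[OF that] by (simp add: abs_sgn mult.commute mult.left_commute)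
    ultimately show ?thesis using has_vector_derivative_within_subset[OF _ sub(1)] by simp
  qed
  show xf: "fst (\<gamma> t) = fst (\<gamma> \<alpha>) + \<sigma> * (t - \<alpha>)" if t: "t \<in> {\<alpha>..\<beta>}" for t
  proof -
    have "fst (\<gamma> t) - fst (\<gamma> \<alpha>) = (fst (\<gamma> \<alpha>) + \<sigma> * (t - \<alpha>)) - (fst (\<gamma> \<alpha>) + \<sigma> * (\<alpha> - \<alpha>))"
    proof (rule ac_fundamental[OF ac_subset[OF acx sub(1)] N' _ _ _ t, where g="\<lambda>_. \<sigma>" and B=1])
      fix s assume s: "s \<in> {\<alpha>..\<beta>} - N'"
      show "((\<lambda>t. fst (\<gamma> t)) has_real_derivative \<sigma>) (at s within {\<alpha>..\<beta>})"
        using hvd_fst[OF dg[OF s]] by (simp add: has_real_derivative_iff_has_vector_derivative)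
    next
      fix s show "((\<lambda>t. fst (\<gamma> \<alpha>) + \<sigma> * (t - \<alpha>)) has_real_derivative \<sigma>) (at s within {\<alpha>..\<beta>})"
        by (auto intro!: derivative_eq_intros)
    next
      fix s show "\<bar>\<sigma>\<bar> \<le> 1" unfolding \<sigma>_def by (simp add: sgn_real_def)
    qed
    then show ?thesis by simp
  qed
  show "fst (lam t) = fst (lam \<alpha>) - \<bar>c\<bar> * sx * (t - \<alpha>)" if t: "t \<in> {\<alpha>..\<beta>}" for t
  proof -
    have "fst (lam t) - fst (lam \<alpha>) = (fst (lam \<alpha>) - \<bar>c\<bar> * sx * (t - \<alpha>)) - (fst (lam \<alpha>) - \<bar>c\<bar> * sx * (\<alpha> - \<alpha>))"
    proof (rule ac_fundamental[OF ac_subset[OF acp sub(1)] N' _ _ _ t, where g="\<lambda>_. - (\<bar>c\<bar> * sx)" and B="\<bar>c\<bar>"])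
      fix s assume s: "s \<in> {\<alpha>..\<beta>} - N'"
      show "((\<lambda>t. fst (lam t)) has_real_derivative - (\<bar>c\<bar> * sx)) (at s within {\<alpha>..\<beta>})"
        using hvd_fst[OF dl[OF s]] by (simp add: has_real_derivative_iff_has_vector_derivative)
    next
      fix s show "((\<lambda>t. fst (lam \<alpha>) - \<bar>c\<bar> * sx * (t - \<alpha>)) has_real_derivative - (\<bar>c\<bar> * sx)) (at s within {\<alpha>..\<beta>})"
        by (auto intro!: derivative_eq_intros)
    next
      fix s show "\<bar>- (\<bar>c\<bar> * sx)\<bar> \<le> \<bar>c\<bar>" unfolding sx_def by (simp add: sgn_real_def abs_mult)
    qed
    then show ?thesis by simp
  qed
  show "snd (\<gamma> t) = snd (\<gamma> \<alpha>) + sgn c * sx * (fst (\<gamma> \<alpha>) * (t - \<alpha>) + \<sigma> * (t - \<alpha>)^2 / 2)"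
    if t: "t \<in> {\<alpha>..\<beta>}" for t
  proof -
    have "snd (\<gamma> t) - snd (\<gamma> \<alpha>) = (snd (\<gamma> \<alpha>) + sgn c * sx * (fst (\<gamma> \<alpha>) * (t - \<alpha>) + \<sigma> * (t - \<alpha>)^2 / 2))
       - (snd (\<gamma> \<alpha>) + sgn c * sx * (fst (\<gamma> \<alpha>) * (\<alpha> - \<alpha>) + \<sigma> * (\<alpha> - \<alpha>)^2 / 2))"
    proof (rule ac_fundamental[OF ac_subset[OF acy sub(1)] N' _ _ _ t,
          where g="\<lambda>s. sgn c * sx * (fst (\<gamma> \<alpha>) + \<sigma> * (s - \<alpha>))" and B="\<bar>fst (\<gamma> \<alpha>)\<bar> + (\<beta> - \<alpha>)"])
      fix s assume s: "s \<in> {\<alpha>..\<beta>} - N'"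
      have "((\<lambda>t. snd (\<gamma> t)) has_real_derivative sgn c * sx * fst (\<gamma> s)) (at s within {\<alpha>..\<beta>})"
        using hvd_snd[OF dg[OF s]] by (simp add: has_real_derivative_iff_has_vector_derivative)
      then show "((\<lambda>t. snd (\<gamma> t)) has_real_derivative sgn c * sx * (fst (\<gamma> \<alpha>) + \<sigma> * (s - \<alpha>))) (at s within {\<alpha>..\<beta>})"
        using xf[of s] s by simp
    next
      fix s show "((\<lambda>t. snd (\<gamma> \<alpha>) + sgn c * sx * (fst (\<gamma> \<alpha>) * (t - \<alpha>) + \<sigma> * (t - \<alpha>)^2 / 2)) has_real_derivative
          sgn c * sx * (fst (\<gamma> \<alpha>) + \<sigma> * (s - \<alpha>))) (at s within {\<alpha>..\<beta>})"
        by (auto intro!: derivative_eq_intros simp: field_simps)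
    next
      fix s assume s: "s \<in> {\<alpha>..\<beta>}"
      have a1: "\<bar>sgn c * sx\<bar> \<le> 1" unfolding sx_def by (simp add: sgn_real_def abs_mult)
      have a2: "\<bar>\<sigma> * (s - \<alpha>)\<bar> \<le> \<beta> - \<alpha>" unfolding \<sigma>_def using s by (simp add: sgn_real_def abs_mult)
      have "\<bar>sgn c * sx * (fst (\<gamma> \<alpha>) + \<sigma> * (s - \<alpha>))\<bar> = \<bar>sgn c * sx\<bar> * \<bar>fst (\<gamma> \<alpha>) + \<sigma> * (s - \<alpha>)\<bar>"
        by (simp add: abs_mult)
      also have "\<dots> \<le> 1 * \<bar>fst (\<gamma> \<alpha>) + \<sigma> * (s - \<alpha>)\<bar>" by (rule mult_right_mono[OF a1]) simp
      also have "\<dots> \<le> \<bar>fst (\<gamma> \<alpha>)\<bar> + (\<beta> - \<alpha>)" using a2 abs_triangle_ineq[of "fst (\<gamma> \<alpha>)" "\<sigma> * (s - \<alpha>)"] by simp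
      finally show "\<bar>sgn c * sx * (fst (\<gamma> \<alpha>) + \<sigma> * (s - \<alpha>))\<bar> \<le> \<bar>fst (\<gamma> \<alpha>)\<bar> + (\<beta> - \<alpha>)" .
    qed
    then show ?thesis by simp
  qed
qed

end


definition EE :: "real \<Rightarrow> real" where "EE v = v * \<bar>v\<bar> / 2"

lemma EE_deriv: "(EE has_real_derivative \<bar>x\<bar>) (at x)"
proof -
  consider "x = 0" | "x > 0" | "x < 0" by linarith
  then show ?thesis
  proof cases
    case 1
    have "((\<lambda>y. \<bar>y\<bar> / 2) \<longlongrightarrow> \<bar>0\<bar> / 2) (at (0::real))"
      by (intro tendsto_intros) simp
    then have lim: "((\<lambda>y. \<bar>y\<bar> / 2) \<longlongrightarrow> 0) (at (0::real))" by simp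
    have "((\<lambda>y. (EE y - EE 0) / (y - 0)) \<longlongrightarrow> 0) (at (0::real))"
    proof (rule Lim_transform_within[OF lim zero_less_one])
      fix y :: real assume "0 < dist y 0" "dist y 0 < 1"
      then have "y \<noteq> 0" by simp
      then show "\<bar>y\<bar> / 2 = (EE y - EE 0) / (y - 0)" by (simp add: EE_def)
    qed
    then show ?thesis using 1 by (simp add: has_field_derivative_iff)
  next
    case 2
    have d: "((\<lambda>v. v^2 / 2) has_real_derivative x) (at x)"
      by (auto intro!: derivative_eq_intros)
    show ?thesis
      by (rule has_field_derivative_transform_within_open[OF _ open_greaterThan[of 0]])
        (use d 2 in \<open>auto simp: EE_def power2_eq_square\<close>)
  next
    case 3
    have d: "((\<lambda>v. - (v^2 / 2)) has_real_derivative -x) (at x)"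
      by (auto intro!: derivative_eq_intros)
    show ?thesis
      by (rule has_field_derivative_transform_within_open[OF _ open_lessThan[of 0]])
        (use d 3 in \<open>auto simp: EE_def power2_eq_square\<close>)
  qed
qed

lemma ac_cong: "abs_cont_on S f \<Longrightarrow> (\<And>t. t \<in> S \<Longrightarrow> f t = g t) \<Longrightarrow> abs_cont_on S g"
proof -
  assume f: "abs_cont_on S f" and fg: "\<And>t. t \<in> S \<Longrightarrow> f t = g t"
  show ?thesis
  proof (rule ac_I)
    fix e :: real assume e: "e > 0"
    obtain d where d: "d > 0" and H: "\<And>n::nat. \<And>a b. \<forall>i<n. a i \<in> S \<and> b i \<in> S \<and> a i \<le> b i \<Longrightarrow>
        disjoint_family_on (\<lambda>i. {a i<..<b i}) {..<n} \<Longrightarrow> (\<Sum>i<n. b i - a i) < d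
        \<Longrightarrow> (\<Sum>i<n. norm (f (b i) - f (a i))) < e"
      using ac_D[OF f e] by auto
    show "\<exists>d>0. \<forall>n::nat. \<forall>a b. (\<forall>i<n. a i \<in> S \<and> b i \<in> S \<and> a i \<le> b i) \<longrightarrow>
        disjoint_family_on (\<lambda>i. {a i<..<b i}) {..<n} \<longrightarrow> (\<Sum>i<n. b i - a i) < d
        \<longrightarrow> (\<Sum>i<n. norm (g (b i) - g (a i))) < e"
    proof (intro exI[of _ d] conjI allI impI)
      fix n :: nat and a b assume ab: "\<forall>i<n. a i \<in> S \<and> b i \<in> S \<and> a i \<le> b i"
        and dj: "disjoint_family_on (\<lambda>i. {a i<..<b i}) {..<n}"
        and s: "(\<Sum>i<n. b i - a i) < d"
      have "(\<Sum>i<n. norm (g (b i) - g (a i))) = (\<Sum>i<n. norm (f (b i) - f (a i)))"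
        by (rule sum.cong) (use ab fg in auto)
      then show "(\<Sum>i<n. norm (g (b i) - g (a i))) < e" using H[OF ab dj s] by simp
    qed (rule d)
  qed
qed


lemma EE_chain[derivative_intros]:
  "(f has_real_derivative f') (at x within S) \<Longrightarrow> ((\<lambda>x. EE (f x)) has_real_derivative (\<bar>f x\<bar> * f')) (at x within S)"
  by (rule DERIV_chain2[OF EE_deriv])

lemma adm_leg:
  assumes \<rho>: "\<rho> \<in> {-1,1}" and s: "\<bar>s\<bar> \<le> 1" and \<tau>: "0 \<le> \<tau>"
  shows "admissible \<tau> (\<lambda>t. (x0 + \<rho>*t, y0 + s*\<rho>*(EE (x0 + \<rho>*t) - EE x0))) (\<lambda>t. (\<rho>, s * sgn (x0 + \<rho>*t)))"
proof -
  define g where "g = (\<lambda>t. (x0 + \<rho>*t, y0 + s*\<rho>*(EE (x0 + \<rho>*t) - EE x0)))"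
  have rr: "\<rho> * \<rho> = 1" "\<bar>\<rho>\<bar> = 1" using \<rho> by auto
  have dx: "((\<lambda>t. x0 + \<rho>*t) has_real_derivative \<rho>) (at t within S)" for t S
    by (auto intro!: derivative_eq_intros)
  have dy: "((\<lambda>t. y0 + s*\<rho>*(EE (x0 + \<rho>*t) - EE x0)) has_real_derivative s * \<bar>x0 + \<rho>*t\<bar>) (at t within S)" for t S
  proof -
    have e: "((\<lambda>t. EE (x0 + \<rho>*t)) has_real_derivative \<bar>x0 + \<rho>*t\<bar> * \<rho>) (at t within S)"
      using EE_chain[OF dx] .
    have "((\<lambda>t. y0 + s*\<rho>*(EE (x0 + \<rho>*t) - EE x0)) has_real_derivative 0 + s*\<rho>*(\<bar>x0 + \<rho>*t\<bar> * \<rho> - 0)) (at t within S)"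
      by (rule DERIV_add[OF DERIV_const DERIV_cmult[OF DERIV_diff[OF e DERIV_const]]])
    moreover have "0 + s*\<rho>*(\<bar>x0 + \<rho>*t\<bar> * \<rho> - 0) = s * \<bar>x0 + \<rho>*t\<bar>"
      using rr by (simp add: algebra_simps)
    ultimately show ?thesis by metis
  qed
  have dg: "(g has_vector_derivative (\<rho>, s * \<bar>x0 + \<rho>*t\<bar>)) (at t within S)" for t S
    unfolding g_def using has_vector_derivative_Pair[OF dx[of t S, unfolded has_real_derivative_iff_has_vector_derivative]
        dy[of t S, unfolded has_real_derivative_iff_has_vector_derivative]] .
  have ac: "abs_cont_on {0..\<tau>} g"
  proof (rule ac_lip[of "1 + (\<bar>x0\<bar> + \<tau>)"])
    show "0 \<le> 1 + (\<bar>x0\<bar> + \<tau>)" using \<tau> by simp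
    fix a b assume a: "a \<in> {0..\<tau>}" and b: "b \<in> {0..\<tau>}"
    have bx: "\<bar>(x0 + \<rho>*a) - (x0 + \<rho>*b)\<bar> \<le> 1 * \<bar>a - b\<bar>"
      using rr by (simp add: abs_mult right_diff_distrib[symmetric])
    have by': "norm ((y0 + s*\<rho>*(EE (x0 + \<rho>*a) - EE x0)) - (y0 + s*\<rho>*(EE (x0 + \<rho>*b) - EE x0))) \<le> (\<bar>x0\<bar> + \<tau>) * norm (a - b)"
    proof (rule field_differentiable_bound[OF convex_real_interval(5) dy _ a b])
      fix z assume z: "z \<in> {0..\<tau>}"
      have "\<bar>x0 + \<rho>*z\<bar> \<le> \<bar>x0\<bar> + \<bar>\<rho>*z\<bar>" by (rule abs_triangle_ineq)
      also have "\<dots> \<le> \<bar>x0\<bar> + \<tau>" using z rr by (simp add: abs_mult)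
      finally have "\<bar>x0 + \<rho>*z\<bar> \<le> \<bar>x0\<bar> + \<tau>" .
      then show "norm (s * \<bar>x0 + \<rho>*z\<bar>) \<le> \<bar>x0\<bar> + \<tau>"
        using s by (simp add: abs_mult) (metis abs_ge_zero mult_le_one mult_mono order_trans mult_1 mult.commute)
    qed
    have "norm (g a - g b) \<le> norm (fst (g a - g b)) + norm (snd (g a - g b))"
      by (metis norm_Pair_le prod.collapse)
    also have "\<dots> \<le> 1 * \<bar>a - b\<bar> + (\<bar>x0\<bar> + \<tau>) * \<bar>a - b\<bar>"
      using bx by' by (simp add: g_def)
    finally show "norm (g a - g b) \<le> (1 + (\<bar>x0\<bar> + \<tau>)) * \<bar>a - b\<bar>" by (simp add: algebra_simps)
  qed
  have ms: "(\<lambda>t. (\<rho>, s * sgn (x0 + \<rho>*t))) measurable_on {0..\<tau>}"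
  proof -
    have [measurable]: "(\<lambda>x::real. x) \<in> borel_measurable (lebesgue_on {0..\<tau>})"
      by (rule continuous_imp_measurable_on_sets_lebesgue) (auto intro: continuous_intros)
    show ?thesis
      by (subst measurable_on_iff_borel_measurable) (simp, measurable)
  qed
  have der: "(g has_vector_derivative (\<rho> *\<^sub>R X1 (g t) + (s * sgn (x0 + \<rho>*t)) *\<^sub>R X2 (g t))) (at t within {0..\<tau>})" for t
  proof -
    have "\<rho> *\<^sub>R X1 (g t) + (s * sgn (x0 + \<rho>*t)) *\<^sub>R X2 (g t) = (\<rho>, s * \<bar>x0 + \<rho>*t\<bar>)"
      by (simp add: X1_def X2_def g_def abs_sgn mult.assoc)
    then show ?thesis using dg by simp
  qed
  have bnd: "\<bar>\<rho>\<bar> \<le> 1 \<and> \<bar>s * sgn (x0 + \<rho>*t)\<bar> \<le> 1" for t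
    using rr s by (auto simp: abs_mult sgn_real_def)
  show ?thesis
    unfolding admissible_def g_def[symmetric] using \<tau> ac ms der bnd by (auto intro!: AE_I2)
qed


lemma meas_transl:
  fixes f :: "real \<Rightarrow> 'b::real_normed_vector"
  assumes "f measurable_on S"
  shows "(\<lambda>t. f (t + c)) measurable_on ((\<lambda>t. t - c) ` S)"
proof -
  obtain N g where N: "negligible N" and g: "\<And>n. continuous_on UNIV (g n)"
    and lim: "\<And>x. x \<notin> N \<Longrightarrow> (\<lambda>n. g n x) \<longlonglongrightarrow> (if x \<in> S then f x else 0)"
    using assms unfolding measurable_on_def by blast
  show ?thesis unfolding measurable_on_def
  proof (intro exI conjI allI impI)
    show "negligible ((+) (-c) ` N)" using negligible_translation[OF N] .
    show "continuous_on UNIV (\<lambda>t. g n (t + c))" for n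
      by (rule continuous_on_compose2[OF g[of n]]) (auto intro: continuous_intros)
    fix x assume x: "x \<notin> (+) (-c) ` N"
    then have "x + c \<notin> N" by (metis add.commute add_uminus_conv_diff diff_add_cancel image_eqI)
    moreover have "(x \<in> (\<lambda>t. t - c) ` S) = (x + c \<in> S)" by (auto simp: image_iff) (metis add_diff_cancel)
    ultimately show "(\<lambda>n. g n (x + c)) \<longlonglongrightarrow> (if x \<in> (\<lambda>t. t - c) ` S then f (x + c) else 0)"
      using lim[of "x + c"] by simp
  qed
qed

lemma meas_subset:
  fixes f :: "real \<Rightarrow> 'b::real_normed_vector"
  assumes f: "f measurable_on S" and sub: "T \<subseteq> S" and T: "T \<in> sets lebesgue"
  shows "f measurable_on T"
proof -
  have "(\<lambda>x. if x \<in> S then f x else 0) measurable_on UNIV" using f by (simp add: measurable_on_UNIV)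
  from measurable_on_restrict[OF this T]
  have "(\<lambda>x. if x \<in> T then (if x \<in> S then f x else 0) else 0) measurable_on UNIV" .
  moreover have "(\<lambda>x. if x \<in> T then (if x \<in> S then f x else 0) else 0) = (\<lambda>x. if x \<in> T then f x else 0)"
    using sub by (auto simp: fun_eq_iff)
  ultimately have "(\<lambda>x. if x \<in> T then f x else 0) measurable_on UNIV" by simp
  then show ?thesis by (simp add: measurable_on_UNIV)
qed

lemma hvd_shift:
  assumes "(f has_vector_derivative v) (at (t + c) within S)"
  shows "((\<lambda>s. f (s + c)) has_vector_derivative v) (at t within ((\<lambda>s. s - c) ` S))"
proof -
  have i: "((\<lambda>s. s + c) has_vector_derivative 1) (at t within ((\<lambda>s. s - c) ` S))"
    by (auto intro!: derivative_eq_intros)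
  have im: "(\<lambda>s. s + c) ` ((\<lambda>s. s - c) ` S) = S" by (auto simp: image_iff)
  from vector_diff_chain_within[OF i, of f v] assms show ?thesis by (simp add: im o_def)
qed

lemma AE_from_negligible:
  assumes "negligible N" "\<And>t. t \<notin> N \<Longrightarrow> P t"
  shows "AE t in lebesgue. P t"
  by (rule AE_I'[of N]) (use assms in \<open>auto simp: negligible_iff_null_sets\<close>)

lemma adm_shift:
  assumes adm: "admissible T \<gamma> u" and s: "0 \<le> s" "s \<le> T"
  shows "admissible (T - s) (\<lambda>t. \<gamma> (t + s)) (\<lambda>t. u (t + s))"
proof -
  have im: "(\<lambda>t. t - s) ` {s..T} = {0..T - s}" by simp
  have ac: "abs_cont_on {0..T} \<gamma>" and ms: "u measurable_on {0..T}"
    and A1: "AE t in lebesgue. t \<in> {0..T} \<longrightarrow> \<bar>fst (u t)\<bar> \<le> 1 \<and> \<bar>snd (u t)\<bar> \<le> 1"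
    and A2: "AE t in lebesgue. t \<in> {0..T} \<longrightarrow>
        (\<gamma> has_vector_derivative (fst (u t) *\<^sub>R X1 (\<gamma> t) + snd (u t) *\<^sub>R X2 (\<gamma> t))) (at t within {0..T})"
    using adm by (auto simp: admissible_def)
  obtain N where N: "negligible N" and NP: "\<And>t. t \<notin> N \<Longrightarrow> t \<in> {0..T} \<longrightarrow> (\<bar>fst (u t)\<bar> \<le> 1 \<and> \<bar>snd (u t)\<bar> \<le> 1) \<and>
        (\<gamma> has_vector_derivative (fst (u t) *\<^sub>R X1 (\<gamma> t) + snd (u t) *\<^sub>R X2 (\<gamma> t))) (at t within {0..T})"
    using AE_conjI[OF A1 A2] by (rule AE_negligible) (metis (mono_tags, lifting))
  have ac': "abs_cont_on {0..T - s} (\<lambda>t. \<gamma> (t + s))"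
    using ac_shift[OF ac_subset[OF ac, of "{s..T}"], of s] s by simp
  have ms': "(\<lambda>t. u (t + s)) measurable_on {0..T - s}"
    using meas_transl[OF meas_subset[OF ms, of "{s..T}"], of s] s im by auto
  have key: "(\<bar>fst (u (t+s))\<bar> \<le> 1 \<and> \<bar>snd (u (t+s))\<bar> \<le> 1) \<and>
     ((\<lambda>t. \<gamma> (t + s)) has_vector_derivative (fst (u (t+s)) *\<^sub>R X1 (\<gamma> (t+s)) + snd (u (t+s)) *\<^sub>R X2 (\<gamma> (t+s)))) (at t within {0..T-s})"
    if t: "t \<notin> (+) (-s) ` N" "t \<in> {0..T - s}" for t
  proof -
    have "t + s \<notin> N" using t(1) by (metis add.commute add_uminus_conv_diff add_diff_cancel image_eqI)
    moreover have "t + s \<in> {0..T}" using t(2) s by auto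
    ultimately have P: "(\<bar>fst (u (t+s))\<bar> \<le> 1 \<and> \<bar>snd (u (t+s))\<bar> \<le> 1) \<and>
        (\<gamma> has_vector_derivative (fst (u (t+s)) *\<^sub>R X1 (\<gamma> (t+s)) + snd (u (t+s)) *\<^sub>R X2 (\<gamma> (t+s)))) (at (t+s) within {0..T})"
      using NP by blast
    have "(\<gamma> has_vector_derivative (fst (u (t+s)) *\<^sub>R X1 (\<gamma> (t+s)) + snd (u (t+s)) *\<^sub>R X2 (\<gamma> (t+s)))) (at (t+s) within {s..T})"
      using P has_vector_derivative_within_subset[of \<gamma> _ "t+s" "{0..T}" "{s..T}"] s by auto
    from hvd_shift[OF this] show ?thesis using P im by simp
  qed
  show ?thesis unfolding admissible_def
    using s ac' ms' by (auto intro!: AE_from_negligible[OF negligible_translation[OF N, of "-s"]] dest: key)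
qed


lemma adm_concat:
  assumes adm1: "admissible T1 \<gamma>1 u1" and adm2: "admissible T2 \<gamma>2 u2" and j: "\<gamma>1 T1 = \<gamma>2 0"
  shows "admissible (T1 + T2) (\<lambda>t. if t \<le> T1 then \<gamma>1 t else \<gamma>2 (t - T1)) (\<lambda>t. if t \<le> T1 then u1 t else u2 (t - T1))"
proof -
  define G where "G = (\<lambda>t. if t \<le> T1 then \<gamma>1 t else \<gamma>2 (t - T1))"
  define U where "U = (\<lambda>t. if t \<le> T1 then u1 t else u2 (t - T1))"
  have T1: "0 \<le> T1" and ac1: "abs_cont_on {0..T1} \<gamma>1" and ms1: "u1 measurable_on {0..T1}"
    and A11: "AE t in lebesgue. t \<in> {0..T1} \<longrightarrow> \<bar>fst (u1 t)\<bar> \<le> 1 \<and> \<bar>snd (u1 t)\<bar> \<le> 1"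
    and A12: "AE t in lebesgue. t \<in> {0..T1} \<longrightarrow>
        (\<gamma>1 has_vector_derivative (fst (u1 t) *\<^sub>R X1 (\<gamma>1 t) + snd (u1 t) *\<^sub>R X2 (\<gamma>1 t))) (at t within {0..T1})"
    using adm1 by (auto simp: admissible_def)
  have T2: "0 \<le> T2" and ac2: "abs_cont_on {0..T2} \<gamma>2" and ms2: "u2 measurable_on {0..T2}"
    and A21: "AE t in lebesgue. t \<in> {0..T2} \<longrightarrow> \<bar>fst (u2 t)\<bar> \<le> 1 \<and> \<bar>snd (u2 t)\<bar> \<le> 1"
    and A22: "AE t in lebesgue. t \<in> {0..T2} \<longrightarrow>
        (\<gamma>2 has_vector_derivative (fst (u2 t) *\<^sub>R X1 (\<gamma>2 t) + snd (u2 t) *\<^sub>R X2 (\<gamma>2 t))) (at t within {0..T2})"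
    using adm2 by (auto simp: admissible_def)
  obtain N1 where N1: "negligible N1" and NP1: "\<And>t. t \<notin> N1 \<Longrightarrow> t \<in> {0..T1} \<longrightarrow> (\<bar>fst (u1 t)\<bar> \<le> 1 \<and> \<bar>snd (u1 t)\<bar> \<le> 1) \<and>
        (\<gamma>1 has_vector_derivative (fst (u1 t) *\<^sub>R X1 (\<gamma>1 t) + snd (u1 t) *\<^sub>R X2 (\<gamma>1 t))) (at t within {0..T1})"
    using AE_conjI[OF A11 A12] by (rule AE_negligible) (metis (mono_tags, lifting))
  obtain N2 where N2: "negligible N2" and NP2: "\<And>t. t \<notin> N2 \<Longrightarrow> t \<in> {0..T2} \<longrightarrow> (\<bar>fst (u2 t)\<bar> \<le> 1 \<and> \<bar>snd (u2 t)\<bar> \<le> 1) \<and>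
        (\<gamma>2 has_vector_derivative (fst (u2 t) *\<^sub>R X1 (\<gamma>2 t) + snd (u2 t) *\<^sub>R X2 (\<gamma>2 t))) (at t within {0..T2})"
    using AE_conjI[OF A21 A22] by (rule AE_negligible) (metis (mono_tags, lifting))
  have im: "(\<lambda>t. t - - T1) ` {0..T2} = {T1..T1+T2}" by (simp add: add.commute)
  have acG: "abs_cont_on {0..T1+T2} G"
  proof (rule ac_join[of 0 T1 G])
    show "abs_cont_on {0..T1} G" by (rule ac_cong[OF ac1]) (auto simp: G_def)
    have "abs_cont_on {0 - - T1..T2 - - T1} (\<lambda>t. \<gamma>2 (t + - T1))" by (rule ac_shift[OF ac2])
    then have a2: "abs_cont_on {T1..T1+T2} (\<lambda>t. \<gamma>2 (t + - T1))" by (simp add: add.commute)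
    show "abs_cont_on {T1..T1+T2} G"
    proof (rule ac_cong[OF a2])
      fix t assume "t \<in> {T1..T1+T2}"
      then show "\<gamma>2 (t + - T1) = G t" using j by (cases "t = T1") (auto simp: G_def)
    qed
  qed (use T1 T2 in auto)
  have msU: "U measurable_on {0..T1+T2}"
  proof -
    have m1: "(\<lambda>t. if t \<in> {0..T1} then u1 t else 0) measurable_on UNIV" using ms1 by (rule measurable_on_UNIV[THEN iffD2])
    have "(\<lambda>t. u2 (t + - T1)) measurable_on {T1..T1+T2}" using meas_transl[OF ms2, of "-T1"] im by (simp add: add.commute)
    then have "(\<lambda>t. u2 (t + - T1)) measurable_on {T1<..T1+T2}" by (rule meas_subset) auto
    then have m2: "(\<lambda>t. if t \<in> {T1<..T1+T2} then u2 (t + - T1) else 0) measurable_on UNIV"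
      by (rule measurable_on_UNIV[THEN iffD2])
    have "(\<lambda>t. (if t \<in> {0..T1} then u1 t else 0) + (if t \<in> {T1<..T1+T2} then u2 (t + - T1) else 0)) measurable_on UNIV"
      by (rule measurable_on_add[OF m1 m2])
    moreover have "(\<lambda>t. (if t \<in> {0..T1} then u1 t else 0) + (if t \<in> {T1<..T1+T2} then u2 (t + - T1) else 0))
        = (\<lambda>t. if t \<in> {0..T1+T2} then U t else 0)"
      using T1 T2 by (auto simp: fun_eq_iff U_def)
    ultimately show ?thesis using measurable_on_UNIV[where f=U and S="{0..T1+T2}"] by simp
  qed
  define N where "N = N1 \<union> (+) T1 ` N2 \<union> {T1}"
  have N: "negligible N" unfolding N_def using N1 negligible_translation[OF N2] by auto
  have key: "(\<bar>fst (U t)\<bar> \<le> 1 \<and> \<bar>snd (U t)\<bar> \<le> 1) \<and>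
     (G has_vector_derivative (fst (U t) *\<^sub>R X1 (G t) + snd (U t) *\<^sub>R X2 (G t))) (at t within {0..T1+T2})"
    if t: "t \<notin> N" "t \<in> {0..T1+T2}" for t
  proof (cases "t < T1")
    case True
    then have P: "(\<bar>fst (u1 t)\<bar> \<le> 1 \<and> \<bar>snd (u1 t)\<bar> \<le> 1) \<and>
        (\<gamma>1 has_vector_derivative (fst (u1 t) *\<^sub>R X1 (\<gamma>1 t) + snd (u1 t) *\<^sub>R X2 (\<gamma>1 t))) (at t within {0..T1})"
      using NP1[of t] t by (auto simp: N_def)
    have at: "at t within {0..T1+T2} = at t within {0..T1}"
      by (rule at_within_nhd[of _ "{..<T1}"]) (use True T2 in auto)
    have "(G has_vector_derivative (fst (u1 t) *\<^sub>R X1 (\<gamma>1 t) + snd (u1 t) *\<^sub>R X2 (\<gamma>1 t))) (at t within {0..T1})"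
      by (rule has_vector_derivative_transform[of t "{0..T1}" G \<gamma>1]) (use P True t in \<open>auto simp: G_def\<close>)
    then show ?thesis using P True at by (simp add: U_def G_def)
  next
    case False
    then have tT: "T1 < t" using t by (auto simp: N_def)
    have "t - T1 \<notin> N2" using t(1) unfolding N_def by (metis UnCI add_diff_cancel_left' diff_add_cancel image_eqI add.commute)
    moreover have "t - T1 \<in> {0..T2}" using t tT by auto
    ultimately have P: "(\<bar>fst (u2 (t - T1))\<bar> \<le> 1 \<and> \<bar>snd (u2 (t - T1))\<bar> \<le> 1) \<and>
        (\<gamma>2 has_vector_derivative (fst (u2 (t - T1)) *\<^sub>R X1 (\<gamma>2 (t - T1)) + snd (u2 (t - T1)) *\<^sub>R X2 (\<gamma>2 (t - T1))))
          (at (t + - T1) within {0..T2})"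
      using NP2 by simp
    from hvd_shift[OF conjunct2[OF P]]
    have d: "((\<lambda>s. \<gamma>2 (s + - T1)) has_vector_derivative (fst (u2 (t - T1)) *\<^sub>R X1 (\<gamma>2 (t - T1)) + snd (u2 (t - T1)) *\<^sub>R X2 (\<gamma>2 (t - T1))))
          (at t within {T1..T1+T2})" using im by (simp add: add.commute)
    have at: "at t within {0..T1+T2} = at t within {T1..T1+T2}"
      by (rule at_within_nhd[of _ "{T1<..}"]) (use tT T1 in auto)
    have "(G has_vector_derivative (fst (u2 (t - T1)) *\<^sub>R X1 (\<gamma>2 (t - T1)) + snd (u2 (t - T1)) *\<^sub>R X2 (\<gamma>2 (t - T1))))
          (at t within {T1..T1+T2})"
      by (rule has_vector_derivative_transform[OF _ _ d]) (use tT t j in \<open>auto simp: G_def\<close>)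
    then show ?thesis using P tT at by (simp add: U_def G_def)
  qed
  show ?thesis unfolding admissible_def G_def[symmetric] U_def[symmetric]
    using T1 T2 acG msU by (auto intro!: AE_from_negligible[OF N] dest: key)
qed


lemma endpoint_sign:
  fixes f :: "real \<Rightarrow> real"
  assumes cont: "continuous_on {\<alpha>..\<beta>} f" and ab: "\<alpha> < \<beta>" and pos: "\<And>t. t \<in> {\<alpha><..<\<beta>} \<Longrightarrow> 0 < f t"
  shows "0 \<le> f \<alpha>" "0 \<le> f \<beta>"
proof -
  show "0 \<le> f \<alpha>"
  proof (rule ccontr)
    assume "\<not> 0 \<le> f \<alpha>"
    then have n: "f \<alpha> < 0" by simp
    obtain d where d: "d > 0" and H: "\<And>s. s \<in> {\<alpha>..\<beta>} \<Longrightarrow> dist s \<alpha> < d \<Longrightarrow> dist (f s) (f \<alpha>) < - f \<alpha>"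
      using cont ab n unfolding continuous_on_iff by (metis atLeastAtMost_iff less_eq_real_def neg_0_less_iff_less)
    define s where "s = \<alpha> + min (d/2) ((\<beta> - \<alpha>)/2)"
    have s: "s \<in> {\<alpha><..<\<beta>}" "dist s \<alpha> < d" using d ab by (auto simp: s_def dist_real_def min_def field_simps)
    then have "dist (f s) (f \<alpha>) < - f \<alpha>" using H by auto
    moreover have "0 < f s" using pos s by blast
    ultimately show False by (simp add: dist_real_def)
  qed
  show "0 \<le> f \<beta>"
  proof (rule ccontr)
    assume "\<not> 0 \<le> f \<beta>"
    then have n: "f \<beta> < 0" by simp
    obtain d where d: "d > 0" and H: "\<And>s. s \<in> {\<alpha>..\<beta>} \<Longrightarrow> dist s \<beta> < d \<Longrightarrow> dist (f s) (f \<beta>) < - f \<beta>"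
      using cont ab n unfolding continuous_on_iff by (metis atLeastAtMost_iff less_eq_real_def neg_0_less_iff_less)
    define s where "s = \<beta> - min (d/2) ((\<beta> - \<alpha>)/2)"
    have s: "s \<in> {\<alpha><..<\<beta>}" "dist s \<beta> < d" using d ab by (auto simp: s_def dist_real_def min_def field_simps)
    then have "dist (f s) (f \<beta>) < - f \<beta>" using H by auto
    moreover have "0 < f s" using pos s by blast
    ultimately show False by (simp add: dist_real_def)
  qed
qed

lemma sgn_cases: "(v::real) \<noteq> 0 \<Longrightarrow> sgn v = 1 \<and> v > 0 \<or> sgn v = -1 \<and> v < 0"
  by (auto simp: sgn_real_def)

locale ctx2 = ctx +
  assumes c0: "c \<noteq> 0" and K0: "K > 0"
begin

definition "a = K / \<bar>c\<bar>"

lemma a_pos: "a > 0" and ca: "\<bar>c\<bar> * a = K"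
  using c0 K0 by (auto simp: a_def)

lemma inv2: "t \<in> {0..T} \<Longrightarrow> \<bar>fst (lam t)\<bar> + \<bar>c\<bar> * \<bar>fst (\<gamma> t)\<bar> = K"
  using inv by (simp add: abs_mult)

lemma gapX:
  assumes ab: "0 \<le> \<alpha>" "\<alpha> < \<beta>" "\<beta> \<le> T"
    and nz: "\<forall>t\<in>{\<alpha><..<\<beta>}. fst (lam t) \<noteq> 0 \<and> fst (\<gamma> t) \<noteq> 0"
    and x0: "fst (\<gamma> \<alpha>) = 0" and z: "fst (lam \<beta>) = 0 \<or> fst (\<gamma> \<beta>) = 0"
  defines "\<sigma> \<equiv> sgn (fst (lam ((\<alpha>+\<beta>)/2)))"
  shows "\<sigma> \<in> {-1,1}" "\<beta> = \<alpha> + a" "fst (lam \<alpha>) = \<sigma> * K" "fst (\<gamma> \<beta>) = \<sigma> * a" "fst (lam \<beta>) = 0"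
    "snd (\<gamma> \<beta>) = snd (\<gamma> \<alpha>) + sgn c * a^2 / 2"
proof -
  define m where "m = (\<alpha>+\<beta>)/2"
  have m: "m \<in> {\<alpha><..<\<beta>}" "m \<in> {\<alpha>..\<beta>}" using ab by (auto simp: m_def)
  note G = gap[OF ab c0 nz]
  define sx where "sx = sgn (fst (\<gamma> m))"
  have s1: "\<sigma> \<in> {-1,1}" using G(1) by (simp add: \<sigma>_def)
  have s2: "sx \<in> {-1,1}" using G(2) by (simp add: sx_def m_def)
  have xf: "fst (\<gamma> t) = \<sigma> * (t - \<alpha>)" if "t \<in> {\<alpha>..\<beta>}" for t using G(4)[OF that] x0 by (simp add: \<sigma>_def)
  have pf: "fst (lam t) = fst (lam \<alpha>) - \<bar>c\<bar> * sx * (t - \<alpha>)" if "t \<in> {\<alpha>..\<beta>}" for t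
    using G(5)[OF that] by (simp add: sx_def m_def)
  have yf: "snd (\<gamma> t) = snd (\<gamma> \<alpha>) + sgn c * sx * (\<sigma> * (t - \<alpha>)^2 / 2)" if "t \<in> {\<alpha>..\<beta>}" for t
    using G(6)[OF that] x0 by (simp add: sx_def m_def \<sigma>_def)
  have spm: "sgn (fst (lam m)) = \<sigma>" by (simp add: \<sigma>_def m_def)
  have sxm: "sgn (fst (\<gamma> m)) = sx" by (simp add: sx_def)
  have Pa: "\<bar>fst (lam \<alpha>)\<bar> = K" using inv2[of \<alpha>] x0 ab by simp
  have sxs: "sx = \<sigma>" using sxm xf[OF m(2)] m s1 by (auto simp: sgn_mult)
  have ma: "m - \<alpha> > 0" using m by simp
  have pa: "fst (lam \<alpha>) = \<sigma> * K"
  proof -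
    have "fst (lam m) = fst (lam \<alpha>) - \<bar>c\<bar> * \<sigma> * (m - \<alpha>)" using pf[OF m(2)] sxs by simp
    moreover have "\<bar>c\<bar> * (m - \<alpha>) > 0" using c0 ma by simp
    ultimately show ?thesis using s1 spm Pa by (auto simp: sgn_real_def split: if_splits)
  qed
  have xb: "fst (\<gamma> \<beta>) \<noteq> 0" using xf[of \<beta>] ab s1 by auto
  then have pb: "fst (lam \<beta>) = 0" using z by simp
  have "fst (lam \<beta>) = \<sigma> * K - \<bar>c\<bar> * \<sigma> * (\<beta> - \<alpha>)" using pf[of \<beta>] ab pa sxs by simp
  then have "\<sigma> * (K - \<bar>c\<bar> * (\<beta> - \<alpha>)) = 0" using pb by (simp add: algebra_simps)
  then have Kb: "\<bar>c\<bar> * (\<beta> - \<alpha>) = K" using s1 by auto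
  have "\<bar>c\<bar> * (\<beta> - \<alpha>) = \<bar>c\<bar> * a" using Kb ca by linarith
  then have ba: "\<beta> - \<alpha> = a" using c0 by simp
  show "\<sigma> \<in> {-1,1}" by (rule s1)
  show "\<beta> = \<alpha> + a" using ba by simp
  show "fst (lam \<alpha>) = \<sigma> * K" by (rule pa)
  show "fst (\<gamma> \<beta>) = \<sigma> * a" using xf[of \<beta>] ab ba by simp
  show "fst (lam \<beta>) = 0" by (rule pb)
  have "\<sigma> * \<sigma> = 1" using s1 by auto
  then show "snd (\<gamma> \<beta>) = snd (\<gamma> \<alpha>) + sgn c * a^2 / 2" using yf[of \<beta>] ab ba sxs
    by (simp add: algebra_simps)
qed


lemma gapP:
  assumes ab: "0 \<le> \<alpha>" "\<alpha> < \<beta>" "\<beta> \<le> T"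
    and nz: "\<forall>t\<in>{\<alpha><..<\<beta>}. fst (lam t) \<noteq> 0 \<and> fst (\<gamma> t) \<noteq> 0"
    and p0: "fst (lam \<alpha>) = 0" and z: "fst (lam \<beta>) = 0 \<or> fst (\<gamma> \<beta>) = 0"
  defines "\<sigma> \<equiv> sgn (fst (lam ((\<alpha>+\<beta>)/2)))"
  shows "\<sigma> \<in> {-1,1}" "\<beta> = \<alpha> + a" "fst (\<gamma> \<alpha>) = - \<sigma> * a" "fst (\<gamma> \<beta>) = 0" "fst (lam \<beta>) = \<sigma> * K"
    "snd (\<gamma> \<beta>) = snd (\<gamma> \<alpha>) + sgn c * a^2 / 2"
proof -
  define m where "m = (\<alpha>+\<beta>)/2"
  have m: "m \<in> {\<alpha><..<\<beta>}" "m \<in> {\<alpha>..\<beta>}" using ab by (auto simp: m_def)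
  note G = gap[OF ab c0 nz]
  define sx where "sx = sgn (fst (\<gamma> m))"
  have s1: "\<sigma> \<in> {-1,1}" using G(1) by (simp add: \<sigma>_def)
  have s2: "sx \<in> {-1,1}" using G(2) by (simp add: sx_def m_def)
  have xf: "fst (\<gamma> t) = fst (\<gamma> \<alpha>) + \<sigma> * (t - \<alpha>)" if "t \<in> {\<alpha>..\<beta>}" for t using G(4)[OF that] by (simp add: \<sigma>_def)
  have pf: "fst (lam t) = fst (lam \<alpha>) - \<bar>c\<bar> * sx * (t - \<alpha>)" if "t \<in> {\<alpha>..\<beta>}" for t
    using G(5)[OF that] by (simp add: sx_def m_def)
  have yf: "snd (\<gamma> t) = snd (\<gamma> \<alpha>) + sgn c * sx * (fst (\<gamma> \<alpha>) * (t - \<alpha>) + \<sigma> * (t - \<alpha>)^2 / 2)" if "t \<in> {\<alpha>..\<beta>}" for t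
    using G(6)[OF that] by (simp add: sx_def m_def \<sigma>_def)
  have spm: "sgn (fst (lam t)) = \<sigma>" "sgn (fst (\<gamma> t)) = sx" if "t \<in> {\<alpha><..<\<beta>}" for t
    using G(3)[OF that] by (simp_all add: \<sigma>_def sx_def m_def)
  have sub: "{\<alpha>..\<beta>} \<subseteq> {0..T}" using ab by auto
  have ma: "m - \<alpha> > 0" "\<beta> - m > 0" using m by auto
  have ss: "\<sigma> * \<sigma> = 1" "sx * sx = 1" using s1 s2 by auto
  have endx: "0 \<le> sx * fst (\<gamma> \<alpha>)" "0 \<le> sx * fst (\<gamma> \<beta>)"
  proof -
    have "continuous_on {\<alpha>..\<beta>} (\<lambda>t. sx * fst (\<gamma> t))"
      by (intro continuous_intros continuous_on_subset[OF contx sub])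
    moreover have "0 < sx * fst (\<gamma> t)" if "t \<in> {\<alpha><..<\<beta>}" for t
      using spm(2)[OF that] s2 by (auto simp: sgn_real_def split: if_splits)
    ultimately show "0 \<le> sx * fst (\<gamma> \<alpha>)" "0 \<le> sx * fst (\<gamma> \<beta>)"
      using endpoint_sign[of \<alpha> \<beta> "\<lambda>t. sx * fst (\<gamma> t)"] ab by auto
  qed
  have endp: "0 \<le> \<sigma> * fst (lam \<alpha>)" "0 \<le> \<sigma> * fst (lam \<beta>)"
  proof -
    have "continuous_on {\<alpha>..\<beta>} (\<lambda>t. \<sigma> * fst (lam t))"
      by (intro continuous_intros continuous_on_subset[OF contp sub])
    moreover have "0 < \<sigma> * fst (lam t)" if "t \<in> {\<alpha><..<\<beta>}" for t
      using spm(1)[OF that] s1 by (auto simp: sgn_real_def split: if_splits)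
    ultimately show "0 \<le> \<sigma> * fst (lam \<alpha>)" "0 \<le> \<sigma> * fst (lam \<beta>)"
      using endpoint_sign[of \<alpha> \<beta> "\<lambda>t. \<sigma> * fst (lam t)"] ab by auto
  qed
  have xm: "0 < sx * fst (\<gamma> m)" "0 < \<sigma> * fst (lam m)"
    using spm[OF m(1)] s1 s2 by (auto simp: sgn_real_def split: if_splits)
  have Pa: "\<bar>fst (lam \<alpha>)\<bar> + \<bar>c\<bar> * \<bar>fst (\<gamma> \<alpha>)\<bar> = K" "\<bar>fst (lam \<beta>)\<bar> + \<bar>c\<bar> * \<bar>fst (\<gamma> \<beta>)\<bar> = K"
    using inv2[of \<alpha>] inv2[of \<beta>] ab by auto
  have sig: "\<sigma> = - sx"
  proof -
    have "fst (lam m) = - (\<bar>c\<bar> * sx * (m - \<alpha>))" using pf[OF m(2)] p0 by simp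
    then have "\<sigma> * (\<bar>c\<bar> * sx * (m - \<alpha>)) < 0" using xm(2) by simp
    moreover have "\<bar>c\<bar> * (m - \<alpha>) > 0" using c0 ma by simp
    ultimately show ?thesis using s1 s2 by (auto simp: mult_less_0_iff zero_less_mult_iff)
  qed
  have xa: "fst (\<gamma> \<alpha>) = sx * a"
  proof -
    have "\<bar>c\<bar> * \<bar>fst (\<gamma> \<alpha>)\<bar> = \<bar>c\<bar> * a" using Pa(1) p0 ca by simp
    then have "\<bar>fst (\<gamma> \<alpha>)\<bar> = a" using c0 by simp
    then show ?thesis using endx(1) s2 a_pos by (auto simp: abs_if split: if_splits)
  qed
  have pb: "fst (lam \<beta>) = - \<bar>c\<bar> * sx * (\<beta> - \<alpha>)" using pf[of \<beta>] ab p0 by simp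
  then have "fst (lam \<beta>) \<noteq> 0" using c0 s2 ab by auto
  then have xb: "fst (\<gamma> \<beta>) = 0" using z by simp
  have "fst (\<gamma> \<beta>) = sx * a - sx * (\<beta> - \<alpha>)" using xf[of \<beta>] ab xa sig by simp
  then have "sx * (a - (\<beta> - \<alpha>)) = 0" using xb by (simp add: algebra_simps)
  then have ba: "\<beta> - \<alpha> = a" using s2 by auto
  show "\<sigma> \<in> {-1,1}" by (rule s1)
  show "\<beta> = \<alpha> + a" using ba by simp
  show "fst (\<gamma> \<alpha>) = - \<sigma> * a" using xa sig by simp
  show "fst (\<gamma> \<beta>) = 0" by (rule xb)
  show "fst (lam \<beta>) = \<sigma> * K" using pb ba sig ca by (simp add: algebra_simps)
  show "snd (\<gamma> \<beta>) = snd (\<gamma> \<alpha>) + sgn c * a^2 / 2" using yf[of \<beta>] ab ba xa sig ss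
    by (simp add: algebra_simps power2_eq_square)
qed

lemma gapEndP:
  assumes ab: "0 \<le> \<alpha>" "\<alpha> < \<beta>" "\<beta> \<le> T"
    and nz: "\<forall>t\<in>{\<alpha><..<\<beta>}. fst (lam t) \<noteq> 0 \<and> fst (\<gamma> t) \<noteq> 0"
    and p1: "fst (lam \<beta>) = 0"
  defines "\<sigma> \<equiv> sgn (fst (lam ((\<alpha>+\<beta>)/2)))"
  shows "\<sigma> \<in> {-1,1}" "fst (\<gamma> \<alpha>) = \<sigma> * (a - (\<beta> - \<alpha>))" "\<beta> - \<alpha> \<le> a" "fst (\<gamma> \<beta>) = \<sigma> * a"
    "snd (\<gamma> \<beta>) = snd (\<gamma> \<alpha>) + sgn c * \<sigma> * (fst (\<gamma> \<alpha>) * (\<beta> - \<alpha>) + \<sigma> * (\<beta> - \<alpha>)^2 / 2)"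
proof -
  define m where "m = (\<alpha>+\<beta>)/2"
  have m: "m \<in> {\<alpha><..<\<beta>}" "m \<in> {\<alpha>..\<beta>}" using ab by (auto simp: m_def)
  note G = gap[OF ab c0 nz]
  define sx where "sx = sgn (fst (\<gamma> m))"
  have s1: "\<sigma> \<in> {-1,1}" using G(1) by (simp add: \<sigma>_def)
  have s2: "sx \<in> {-1,1}" using G(2) by (simp add: sx_def m_def)
  have xf: "fst (\<gamma> t) = fst (\<gamma> \<alpha>) + \<sigma> * (t - \<alpha>)" if "t \<in> {\<alpha>..\<beta>}" for t using G(4)[OF that] by (simp add: \<sigma>_def)
  have pf: "fst (lam t) = fst (lam \<alpha>) - \<bar>c\<bar> * sx * (t - \<alpha>)" if "t \<in> {\<alpha>..\<beta>}" for t
    using G(5)[OF that] by (simp add: sx_def m_def)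
  have yf: "snd (\<gamma> t) = snd (\<gamma> \<alpha>) + sgn c * sx * (fst (\<gamma> \<alpha>) * (t - \<alpha>) + \<sigma> * (t - \<alpha>)^2 / 2)" if "t \<in> {\<alpha>..\<beta>}" for t
    using G(6)[OF that] by (simp add: sx_def m_def \<sigma>_def)
  have spm: "sgn (fst (lam t)) = \<sigma>" "sgn (fst (\<gamma> t)) = sx" if "t \<in> {\<alpha><..<\<beta>}" for t
    using G(3)[OF that] by (simp_all add: \<sigma>_def sx_def m_def)
  have sub: "{\<alpha>..\<beta>} \<subseteq> {0..T}" using ab by auto
  have ma: "m - \<alpha> > 0" "\<beta> - m > 0" using m by auto
  have ss: "\<sigma> * \<sigma> = 1" "sx * sx = 1" using s1 s2 by auto
  have endx: "0 \<le> sx * fst (\<gamma> \<alpha>)" "0 \<le> sx * fst (\<gamma> \<beta>)"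
  proof -
    have "continuous_on {\<alpha>..\<beta>} (\<lambda>t. sx * fst (\<gamma> t))"
      by (intro continuous_intros continuous_on_subset[OF contx sub])
    moreover have "0 < sx * fst (\<gamma> t)" if "t \<in> {\<alpha><..<\<beta>}" for t
      using spm(2)[OF that] s2 by (auto simp: sgn_real_def split: if_splits)
    ultimately show "0 \<le> sx * fst (\<gamma> \<alpha>)" "0 \<le> sx * fst (\<gamma> \<beta>)"
      using endpoint_sign[of \<alpha> \<beta> "\<lambda>t. sx * fst (\<gamma> t)"] ab by auto
  qed
  have endp: "0 \<le> \<sigma> * fst (lam \<alpha>)" "0 \<le> \<sigma> * fst (lam \<beta>)"
  proof -
    have "continuous_on {\<alpha>..\<beta>} (\<lambda>t. \<sigma> * fst (lam t))"
      by (intro continuous_intros continuous_on_subset[OF contp sub])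
    moreover have "0 < \<sigma> * fst (lam t)" if "t \<in> {\<alpha><..<\<beta>}" for t
      using spm(1)[OF that] s1 by (auto simp: sgn_real_def split: if_splits)
    ultimately show "0 \<le> \<sigma> * fst (lam \<alpha>)" "0 \<le> \<sigma> * fst (lam \<beta>)"
      using endpoint_sign[of \<alpha> \<beta> "\<lambda>t. \<sigma> * fst (lam t)"] ab by auto
  qed
  have xm: "0 < sx * fst (\<gamma> m)" "0 < \<sigma> * fst (lam m)"
    using spm[OF m(1)] s1 s2 by (auto simp: sgn_real_def split: if_splits)
  have Pa: "\<bar>fst (lam \<alpha>)\<bar> + \<bar>c\<bar> * \<bar>fst (\<gamma> \<alpha>)\<bar> = K" "\<bar>fst (lam \<beta>)\<bar> + \<bar>c\<bar> * \<bar>fst (\<gamma> \<beta>)\<bar> = K"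
    using inv2[of \<alpha>] inv2[of \<beta>] ab by auto
  have sig: "sx = \<sigma>"
  proof -
    have "fst (lam \<alpha>) = \<bar>c\<bar> * sx * (\<beta> - \<alpha>)" using pf[of \<beta>] ab p1 by simp
    then have "fst (lam m) = \<bar>c\<bar> * sx * (\<beta> - m)" using pf[OF m(2)] by (simp add: algebra_simps)
    then have "\<sigma> * (\<bar>c\<bar> * sx * (\<beta> - m)) > 0" using xm(2) by simp
    moreover have "\<bar>c\<bar> * (\<beta> - m) > 0" using c0 ma by simp
    ultimately show ?thesis using s1 s2 by (auto simp: mult_less_0_iff zero_less_mult_iff)
  qed
  have xb: "fst (\<gamma> \<beta>) = \<sigma> * a"
  proof -
    have "\<bar>c\<bar> * \<bar>fst (\<gamma> \<beta>)\<bar> = \<bar>c\<bar> * a" using Pa(2) p1 ca by simp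
    then have "\<bar>fst (\<gamma> \<beta>)\<bar> = a" using c0 by simp
    then show ?thesis using endx(2) s2 sig a_pos by (auto simp: abs_if split: if_splits)
  qed
  have xa: "fst (\<gamma> \<alpha>) = \<sigma> * (a - (\<beta> - \<alpha>))" using xf[of \<beta>] ab xb by (simp add: algebra_simps)
  show "\<sigma> \<in> {-1,1}" by (rule s1)
  show "fst (\<gamma> \<alpha>) = \<sigma> * (a - (\<beta> - \<alpha>))" by (rule xa)
  show "\<beta> - \<alpha> \<le> a" using endx(1) xa sig ss by (simp add: mult.assoc[symmetric])
  show "fst (\<gamma> \<beta>) = \<sigma> * a" by (rule xb)
  show "snd (\<gamma> \<beta>) = snd (\<gamma> \<alpha>) + sgn c * \<sigma> * (fst (\<gamma> \<alpha>) * (\<beta> - \<alpha>) + \<sigma> * (\<beta> - \<alpha>)^2 / 2)"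
    using yf[of \<beta>] ab sig by simp
qed

lemma gapEndX:
  assumes ab: "0 \<le> \<alpha>" "\<alpha> < \<beta>" "\<beta> \<le> T"
    and nz: "\<forall>t\<in>{\<alpha><..<\<beta>}. fst (lam t) \<noteq> 0 \<and> fst (\<gamma> t) \<noteq> 0"
    and x1: "fst (\<gamma> \<beta>) = 0"
  defines "\<sigma> \<equiv> sgn (fst (lam ((\<alpha>+\<beta>)/2)))"
  shows "\<sigma> \<in> {-1,1}" "fst (\<gamma> \<alpha>) = - \<sigma> * (\<beta> - \<alpha>)" "fst (lam \<beta>) = \<sigma> * K"
    "snd (\<gamma> \<beta>) = snd (\<gamma> \<alpha>) + sgn c * (\<beta> - \<alpha>)^2 / 2"
proof -
  define m where "m = (\<alpha>+\<beta>)/2"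
  have m: "m \<in> {\<alpha><..<\<beta>}" "m \<in> {\<alpha>..\<beta>}" using ab by (auto simp: m_def)
  note G = gap[OF ab c0 nz]
  define sx where "sx = sgn (fst (\<gamma> m))"
  have s1: "\<sigma> \<in> {-1,1}" using G(1) by (simp add: \<sigma>_def)
  have s2: "sx \<in> {-1,1}" using G(2) by (simp add: sx_def m_def)
  have xf: "fst (\<gamma> t) = fst (\<gamma> \<alpha>) + \<sigma> * (t - \<alpha>)" if "t \<in> {\<alpha>..\<beta>}" for t using G(4)[OF that] by (simp add: \<sigma>_def)
  have pf: "fst (lam t) = fst (lam \<alpha>) - \<bar>c\<bar> * sx * (t - \<alpha>)" if "t \<in> {\<alpha>..\<beta>}" for t
    using G(5)[OF that] by (simp add: sx_def m_def)
  have yf: "snd (\<gamma> t) = snd (\<gamma> \<alpha>) + sgn c * sx * (fst (\<gamma> \<alpha>) * (t - \<alpha>) + \<sigma> * (t - \<alpha>)^2 / 2)" if "t \<in> {\<alpha>..\<beta>}" for t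
    using G(6)[OF that] by (simp add: sx_def m_def \<sigma>_def)
  have spm: "sgn (fst (lam t)) = \<sigma>" "sgn (fst (\<gamma> t)) = sx" if "t \<in> {\<alpha><..<\<beta>}" for t
    using G(3)[OF that] by (simp_all add: \<sigma>_def sx_def m_def)
  have sub: "{\<alpha>..\<beta>} \<subseteq> {0..T}" using ab by auto
  have ma: "m - \<alpha> > 0" "\<beta> - m > 0" using m by auto
  have ss: "\<sigma> * \<sigma> = 1" "sx * sx = 1" using s1 s2 by auto
  have endx: "0 \<le> sx * fst (\<gamma> \<alpha>)" "0 \<le> sx * fst (\<gamma> \<beta>)"
  proof -
    have "continuous_on {\<alpha>..\<beta>} (\<lambda>t. sx * fst (\<gamma> t))"
      by (intro continuous_intros continuous_on_subset[OF contx sub])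
    moreover have "0 < sx * fst (\<gamma> t)" if "t \<in> {\<alpha><..<\<beta>}" for t
      using spm(2)[OF that] s2 by (auto simp: sgn_real_def split: if_splits)
    ultimately show "0 \<le> sx * fst (\<gamma> \<alpha>)" "0 \<le> sx * fst (\<gamma> \<beta>)"
      using endpoint_sign[of \<alpha> \<beta> "\<lambda>t. sx * fst (\<gamma> t)"] ab by auto
  qed
  have endp: "0 \<le> \<sigma> * fst (lam \<alpha>)" "0 \<le> \<sigma> * fst (lam \<beta>)"
  proof -
    have "continuous_on {\<alpha>..\<beta>} (\<lambda>t. \<sigma> * fst (lam t))"
      by (intro continuous_intros continuous_on_subset[OF contp sub])
    moreover have "0 < \<sigma> * fst (lam t)" if "t \<in> {\<alpha><..<\<beta>}" for t
      using spm(1)[OF that] s1 by (auto simp: sgn_real_def split: if_splits)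
    ultimately show "0 \<le> \<sigma> * fst (lam \<alpha>)" "0 \<le> \<sigma> * fst (lam \<beta>)"
      using endpoint_sign[of \<alpha> \<beta> "\<lambda>t. \<sigma> * fst (lam t)"] ab by auto
  qed
  have xm: "0 < sx * fst (\<gamma> m)" "0 < \<sigma> * fst (lam m)"
    using spm[OF m(1)] s1 s2 by (auto simp: sgn_real_def split: if_splits)
  have Pa: "\<bar>fst (lam \<alpha>)\<bar> + \<bar>c\<bar> * \<bar>fst (\<gamma> \<alpha>)\<bar> = K" "\<bar>fst (lam \<beta>)\<bar> + \<bar>c\<bar> * \<bar>fst (\<gamma> \<beta>)\<bar> = K"
    using inv2[of \<alpha>] inv2[of \<beta>] ab by auto
  have xa: "fst (\<gamma> \<alpha>) = - \<sigma> * (\<beta> - \<alpha>)" using xf[of \<beta>] ab x1 by (simp add: algebra_simps)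
  have sig: "sx = - \<sigma>"
  proof -
    have "fst (\<gamma> m) = - \<sigma> * (\<beta> - m)" using xf[OF m(2)] xa by (simp add: algebra_simps)
    then have "sx * (- \<sigma> * (\<beta> - m)) > 0" using xm(1) by simp
    then show ?thesis using s1 s2 ma by (auto simp: mult_less_0_iff zero_less_mult_iff)
  qed
  have pb: "fst (lam \<beta>) = \<sigma> * K"
  proof -
    define w where "w = \<bar>c\<bar> * (\<beta> - m)"
    have "fst (lam \<beta>) = fst (lam m) + \<bar>c\<bar> * \<sigma> * (\<beta> - m)" using pf[OF m(2)] pf[of \<beta>] ab sig
      by (simp add: algebra_simps)
    then have e: "fst (lam \<beta>) = fst (lam m) + \<sigma> * w" by (simp add: w_def algebra_simps)
    have w: "w > 0" using c0 ma by (simp add: w_def)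
    have K: "\<bar>fst (lam \<beta>)\<bar> = K" using Pa(2) x1 by simp
    show ?thesis
    proof (cases "\<sigma> = 1")
      case True
      then show ?thesis using e w K xm(2) by (auto simp: abs_if split: if_splits)
    next
      case False
      then have "\<sigma> = -1" using s1 by auto
      then show ?thesis using e w K xm(2) by (auto simp: abs_if split: if_splits)
    qed
  qed
  show "\<sigma> \<in> {-1,1}" by (rule s1)
  show "fst (\<gamma> \<alpha>) = - \<sigma> * (\<beta> - \<alpha>)" by (rule xa)
  show "fst (lam \<beta>) = \<sigma> * K" by (rule pb)
  show "snd (\<gamma> \<beta>) = snd (\<gamma> \<alpha>) + sgn c * (\<beta> - \<alpha>)^2 / 2"
  proof -
    define D where "D = (\<beta> - \<alpha>)^2"
    have e1: "snd (\<gamma> \<beta>) = snd (\<gamma> \<alpha>) + sgn c * sx * (fst (\<gamma> \<alpha>) * (\<beta> - \<alpha>) + \<sigma> * D / 2)"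
      using yf[of \<beta>] ab by (simp add: D_def)
    have e2: "fst (\<gamma> \<alpha>) * (\<beta> - \<alpha>) = - \<sigma> * D" using xa by (simp add: D_def power2_eq_square)
    have "snd (\<gamma> \<beta>) = snd (\<gamma> \<alpha>) + sgn c * (\<sigma> * \<sigma>) * (D / 2)"
      unfolding e1 e2 sig by (simp add: algebra_simps)
    then show ?thesis using ss by (simp add: D_def)
  qed
qed

lemma gap3:
  assumes ab: "0 \<le> \<alpha>" "\<alpha> < \<beta>" "\<beta> \<le> T"
    and nz: "\<forall>t\<in>{\<alpha><..<\<beta>}. fst (lam t) \<noteq> 0 \<and> fst (\<gamma> t) \<noteq> 0"
    and x0: "fst (\<gamma> \<alpha>) = 0" and p0: "fst (lam \<alpha>) \<noteq> 0"
  defines "\<sigma> \<equiv> sgn (fst (lam ((\<alpha>+\<beta>)/2)))"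
  shows "\<sigma> = sgn (fst (lam \<alpha>))" "fst (\<gamma> \<beta>) = \<sigma> * (\<beta> - \<alpha>)"
    "snd (\<gamma> \<beta>) = snd (\<gamma> \<alpha>) + sgn c * (\<beta> - \<alpha>)^2 / 2"
proof -
  define m where "m = (\<alpha>+\<beta>)/2"
  have m: "m \<in> {\<alpha><..<\<beta>}" "m \<in> {\<alpha>..\<beta>}" using ab by (auto simp: m_def)
  note G = gap[OF ab c0 nz]
  define sx where "sx = sgn (fst (\<gamma> m))"
  have s1: "\<sigma> \<in> {-1,1}" using G(1) by (simp add: \<sigma>_def)
  have s2: "sx \<in> {-1,1}" using G(2) by (simp add: sx_def m_def)
  have xf: "fst (\<gamma> t) = fst (\<gamma> \<alpha>) + \<sigma> * (t - \<alpha>)" if "t \<in> {\<alpha>..\<beta>}" for t using G(4)[OF that] by (simp add: \<sigma>_def)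
  have pf: "fst (lam t) = fst (lam \<alpha>) - \<bar>c\<bar> * sx * (t - \<alpha>)" if "t \<in> {\<alpha>..\<beta>}" for t
    using G(5)[OF that] by (simp add: sx_def m_def)
  have yf: "snd (\<gamma> t) = snd (\<gamma> \<alpha>) + sgn c * sx * (fst (\<gamma> \<alpha>) * (t - \<alpha>) + \<sigma> * (t - \<alpha>)^2 / 2)" if "t \<in> {\<alpha>..\<beta>}" for t
    using G(6)[OF that] by (simp add: sx_def m_def \<sigma>_def)
  have spm: "sgn (fst (lam t)) = \<sigma>" "sgn (fst (\<gamma> t)) = sx" if "t \<in> {\<alpha><..<\<beta>}" for t
    using G(3)[OF that] by (simp_all add: \<sigma>_def sx_def m_def)
  have sub: "{\<alpha>..\<beta>} \<subseteq> {0..T}" using ab by auto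
  have ma: "m - \<alpha> > 0" "\<beta> - m > 0" using m by auto
  have ss: "\<sigma> * \<sigma> = 1" "sx * sx = 1" using s1 s2 by auto
  have endx: "0 \<le> sx * fst (\<gamma> \<alpha>)" "0 \<le> sx * fst (\<gamma> \<beta>)"
  proof -
    have "continuous_on {\<alpha>..\<beta>} (\<lambda>t. sx * fst (\<gamma> t))"
      by (intro continuous_intros continuous_on_subset[OF contx sub])
    moreover have "0 < sx * fst (\<gamma> t)" if "t \<in> {\<alpha><..<\<beta>}" for t
      using spm(2)[OF that] s2 by (auto simp: sgn_real_def split: if_splits)
    ultimately show "0 \<le> sx * fst (\<gamma> \<alpha>)" "0 \<le> sx * fst (\<gamma> \<beta>)"
      using endpoint_sign[of \<alpha> \<beta> "\<lambda>t. sx * fst (\<gamma> t)"] ab by auto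
  qed
  have endp: "0 \<le> \<sigma> * fst (lam \<alpha>)" "0 \<le> \<sigma> * fst (lam \<beta>)"
  proof -
    have "continuous_on {\<alpha>..\<beta>} (\<lambda>t. \<sigma> * fst (lam t))"
      by (intro continuous_intros continuous_on_subset[OF contp sub])
    moreover have "0 < \<sigma> * fst (lam t)" if "t \<in> {\<alpha><..<\<beta>}" for t
      using spm(1)[OF that] s1 by (auto simp: sgn_real_def split: if_splits)
    ultimately show "0 \<le> \<sigma> * fst (lam \<alpha>)" "0 \<le> \<sigma> * fst (lam \<beta>)"
      using endpoint_sign[of \<alpha> \<beta> "\<lambda>t. \<sigma> * fst (lam t)"] ab by auto
  qed
  have xm: "0 < sx * fst (\<gamma> m)" "0 < \<sigma> * fst (lam m)"
    using spm[OF m(1)] s1 s2 by (auto simp: sgn_real_def split: if_splits)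
  have Pa: "\<bar>fst (lam \<alpha>)\<bar> + \<bar>c\<bar> * \<bar>fst (\<gamma> \<alpha>)\<bar> = K" "\<bar>fst (lam \<beta>)\<bar> + \<bar>c\<bar> * \<bar>fst (\<gamma> \<beta>)\<bar> = K"
    using inv2[of \<alpha>] inv2[of \<beta>] ab by auto
  have sig: "sx = \<sigma>"
  proof -
    have "fst (\<gamma> m) = \<sigma> * (m - \<alpha>)" using xf[OF m(2)] x0 by simp
    then have "sx * (\<sigma> * (m - \<alpha>)) > 0" using xm(1) by simp
    then show ?thesis using s1 s2 ma by (auto simp: mult_less_0_iff zero_less_mult_iff)
  qed
  show "\<sigma> = sgn (fst (lam \<alpha>))" using endp(1) p0 s1 by (auto simp: sgn_real_def mult_le_0_iff zero_le_mult_iff)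
  show "fst (\<gamma> \<beta>) = \<sigma> * (\<beta> - \<alpha>)" using xf[of \<beta>] ab x0 by simp
  show "snd (\<gamma> \<beta>) = snd (\<gamma> \<alpha>) + sgn c * (\<beta> - \<alpha>)^2 / 2"
    using yf[of \<beta>] ab x0 sig ss by (simp add: algebra_simps)
qed

end


lemma adm_tent:
  assumes \<rho>: "\<rho> \<in> {-1,1}" and s: "\<bar>s\<bar> \<le> 1" and t1: "0 \<le> \<tau>1" and t2: "0 \<le> \<tau>2"
  shows "\<exists>G U. admissible (\<tau>1 + \<tau>2) G U \<and> G 0 = (x0, y0) \<and>
     G (\<tau>1 + \<tau>2) = (x0 + \<rho> * (\<tau>1 - \<tau>2), y0 + s * \<rho> * (2 * EE (x0 + \<rho> * \<tau>1) - EE x0 - EE (x0 + \<rho> * (\<tau>1 - \<tau>2))))"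
proof -
  define xM where "xM = x0 + \<rho> * \<tau>1"
  define yM where "yM = y0 + s*\<rho>*(EE xM - EE x0)"
  define g1 where "g1 = (\<lambda>t. (x0 + \<rho>*t, y0 + s*\<rho>*(EE (x0 + \<rho>*t) - EE x0)))"
  define g2 where "g2 = (\<lambda>t. (xM + (-\<rho>)*t, yM + s*(-\<rho>)*(EE (xM + (-\<rho>)*t) - EE xM)))"
  have a1: "admissible \<tau>1 g1 (\<lambda>t. (\<rho>, s * sgn (x0 + \<rho>*t)))" unfolding g1_def by (rule adm_leg[OF \<rho> s t1])
  have \<rho>': "-\<rho> \<in> {-1,1}" using \<rho> by auto
  have a2: "admissible \<tau>2 g2 (\<lambda>t. (-\<rho>, s * sgn (xM + (-\<rho>)*t)))" unfolding g2_def by (rule adm_leg[OF \<rho>' s t2])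
  have j: "g1 \<tau>1 = g2 0" by (simp add: g1_def g2_def xM_def yM_def)
  have rr: "\<rho> * \<rho> = 1" using \<rho> by auto
  let ?G = "\<lambda>t. if t \<le> \<tau>1 then g1 t else g2 (t - \<tau>1)"
  have A: "admissible (\<tau>1 + \<tau>2) ?G (\<lambda>t. if t \<le> \<tau>1 then (\<rho>, s * sgn (x0 + \<rho>*t)) else (-\<rho>, s * sgn (xM + (-\<rho>)*(t - \<tau>1))))"
    using adm_concat[OF a1 a2 j] .
  have G0: "?G 0 = (x0, y0)" using t1 by (simp add: g1_def)
  have "g2 \<tau>2 = (x0 + \<rho> * (\<tau>1 - \<tau>2), y0 + s * \<rho> * (2 * EE (x0 + \<rho> * \<tau>1) - EE x0 - EE (x0 + \<rho> * (\<tau>1 - \<tau>2))))"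
    by (simp add: g2_def xM_def yM_def algebra_simps)
  moreover have "g1 \<tau>1 = g2 \<tau>2" if "\<tau>2 = 0" using j that by simp
  ultimately have GT: "?G (\<tau>1 + \<tau>2) = (x0 + \<rho> * (\<tau>1 - \<tau>2), y0 + s * \<rho> * (2 * EE (x0 + \<rho> * \<tau>1) - EE x0 - EE (x0 + \<rho> * (\<tau>1 - \<tau>2))))"
    using t2 by (cases "\<tau>2 = 0") auto
  show ?thesis using A G0 GT by blast
qed

lemma not_minimizer:
  assumes adm: "admissible T \<gamma> u" and z: "0 \<le> z" "z \<le> T" and \<tau>: "\<tau> < z"
    and a: "admissible \<tau> G U" and G0: "G 0 = \<gamma> 0" and Gt: "G \<tau> = \<gamma> z"
  shows "\<not> time_minimizer T \<gamma>"
proof -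
  have s: "admissible (T - z) (\<lambda>t. \<gamma> (t + z)) (\<lambda>t. u (t + z))" by (rule adm_shift[OF adm z])
  have j: "G \<tau> = (\<lambda>t. \<gamma> (t + z)) 0" using Gt by simp
  have A: "admissible (\<tau> + (T - z)) (\<lambda>t. if t \<le> \<tau> then G t else \<gamma> (t - \<tau> + z))
      (\<lambda>t. if t \<le> \<tau> then U t else u (t - \<tau> + z))"
    using adm_concat[OF a s j] .
  have t0: "0 \<le> \<tau>" using a by (simp add: admissible_def)
  have e0: "(\<lambda>t. if t \<le> \<tau> then G t else \<gamma> (t - \<tau> + z)) 0 = \<gamma> 0" using t0 G0 by simp
  have e1: "(\<lambda>t. if t \<le> \<tau> then G t else \<gamma> (t - \<tau> + z)) (\<tau> + (T - z)) = \<gamma> T"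
    using Gt z by (cases "T = z") auto
  have "\<tau> + (T - z) < T" using \<tau> by simp
  then show ?thesis unfolding time_minimizer_def using A e0 e1 by blast
qed

lemma EE_sv: "\<sigma> \<in> {-1,1} \<Longrightarrow> 0 \<le> v \<Longrightarrow> EE (\<sigma> * v) = \<sigma> * v^2 / 2"
  by (auto simp: EE_def power2_eq_square abs_mult)


lemma tent_beats:
  assumes \<rho>: "\<rho> \<in> {-1,1}" and s: "\<bar>s\<bar> \<le> 1" and t1: "0 \<le> ta" and t2: "0 \<le> tb"
    and adm: "admissible T \<gamma> u" and z: "0 \<le> z" "z \<le> T" and lt: "ta + tb < z"
    and g0: "\<gamma> 0 = (x0, y0)"
    and gz: "\<gamma> z = (x0 + \<rho> * (ta - tb), y0 + s * \<rho> * (2 * EE (x0 + \<rho> * ta) - EE x0 - EE (x0 + \<rho> * (ta - tb))))"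
  shows "\<not> time_minimizer T \<gamma>"
proof -
  obtain G U where "admissible (ta + tb) G U" "G 0 = (x0, y0)"
     "G (ta + tb) = (x0 + \<rho> * (ta - tb), y0 + s * \<rho> * (2 * EE (x0 + \<rho> * ta) - EE x0 - EE (x0 + \<rho> * (ta - tb))))"
    using adm_tent[OF \<rho> s t1 t2, of x0 y0] by blast
  then show ?thesis using not_minimizer[OF adm z lt] g0 gz by metis
qed

context ctx2
begin

lemma sgnc: "\<bar>sgn c\<bar> \<le> 1" by (simp add: sgn_real_def)

lemma caseA:
  assumes adm: "admissible T \<gamma> u" and z: "0 < z1" "z1 < z2" "z2 < z3" "z3 \<le> T"
    and g1: "\<forall>t\<in>{0<..<z1}. fst (lam t) \<noteq> 0 \<and> fst (\<gamma> t) \<noteq> 0"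
    and g2: "\<forall>t\<in>{z1<..<z2}. fst (lam t) \<noteq> 0 \<and> fst (\<gamma> t) \<noteq> 0"
    and g3: "\<forall>t\<in>{z2<..<z3}. fst (lam t) \<noteq> 0 \<and> fst (\<gamma> t) \<noteq> 0"
    and p1: "fst (lam z1) = 0" and zz2: "fst (lam z2) = 0 \<or> fst (\<gamma> z2) = 0"
    and zz3: "fst (lam z3) = 0 \<or> fst (\<gamma> z3) = 0"
  shows "\<not> time_minimizer T \<gamma>"
proof -
  note A1 = gapEndP[of 0 z1, OF _ _ _ g1 p1]
  define \<sigma>1 where "\<sigma>1 = sgn (fst (lam ((0 + z1) / 2)))"
  have s1: "\<sigma>1 \<in> {-1,1}" and x0: "fst (\<gamma> 0) = \<sigma>1 * (a - z1)" and za: "z1 \<le> a"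
    and xz1: "fst (\<gamma> z1) = \<sigma>1 * a" and yz1: "snd (\<gamma> z1) = snd (\<gamma> 0) + sgn c * \<sigma>1 * (fst (\<gamma> 0) * z1 + \<sigma>1 * z1^2 / 2)"
    using A1 z unfolding \<sigma>1_def by auto
  note A2 = gapP[of z1 z2, OF _ _ _ g2 p1 zz2]
  define \<sigma>2 where "\<sigma>2 = sgn (fst (lam ((z1 + z2) / 2)))"
  have s2: "\<sigma>2 \<in> {-1,1}" and z2e: "z2 = z1 + a" and xz1': "fst (\<gamma> z1) = - \<sigma>2 * a" and xz2: "fst (\<gamma> z2) = 0"
    and pz2: "fst (lam z2) = \<sigma>2 * K" and yz2: "snd (\<gamma> z2) = snd (\<gamma> z1) + sgn c * a^2 / 2"
    using A2 z unfolding \<sigma>2_def by auto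
  have s21: "\<sigma>2 = - \<sigma>1" using xz1 xz1' a_pos s1 s2 by auto
  note A3 = gapX[of z2 z3, OF _ _ _ g3 xz2 zz3]
  define \<sigma>3 where "\<sigma>3 = sgn (fst (lam ((z2 + z3) / 2)))"
  have s3: "\<sigma>3 \<in> {-1,1}" and z3e: "z3 = z2 + a" and pz2': "fst (lam z2) = \<sigma>3 * K" and xz3: "fst (\<gamma> z3) = \<sigma>3 * a"
    and yz3: "snd (\<gamma> z3) = snd (\<gamma> z2) + sgn c * a^2 / 2"
    using A3 z unfolding \<sigma>3_def by auto
  have s31: "\<sigma>3 = - \<sigma>1" using pz2 pz2' K0 s21 s2 s3 by auto
  define e where "e = a - z1"
  have e: "0 \<le> e" "e < a" using za z by (auto simp: e_def)
  define Q where "Q = sqrt (2 * a^2 - e^2)"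
  have ee: "e^2 \<le> a^2" using e by (intro power_mono) auto
  have "0 \<le> 2 * a^2 - e^2" using ee zero_le_power2[of a] by linarith
  then have Qsq: "Q^2 = 2 * a^2 - e^2" unfolding Q_def by (rule real_sqrt_pow2)
  have Qa: "a \<le> Q"
  proof -
    have "a^2 \<le> 2 * a^2 - e^2" using ee by simp
    then show ?thesis unfolding Q_def using a_pos by (metis real_le_rsqrt)
  qed
  have Qlt: "Q < 2 * a - e"
  proof -
    have d: "(2 * a - e)^2 - (2 * a^2 - e^2) = 2 * (a - e)^2" by (simp add: power2_eq_square algebra_simps)
    have "0 < (a - e)^2" using e by simp
    then have "2 * a^2 - e^2 < (2 * a - e)^2" using d by linarith
    then have "Q < sqrt ((2*a - e)^2)" unfolding Q_def by (subst real_sqrt_less_iff) simp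
    then show ?thesis using e by simp
  qed
  show ?thesis
  proof (rule tent_beats[where \<rho>="-\<sigma>1" and s="sgn c" and ta="e + Q" and tb="Q - a" and z=z3,
        OF _ sgnc _ _ adm _ z(4)])
    show "-\<sigma>1 \<in> {-1,1}" using s1 by auto
    show "0 \<le> e + Q" "0 \<le> Q - a" using e Qa by auto
    show "0 \<le> z3" using z by simp
    show "e + Q + (Q - a) < z3" using z2e z3e Qlt by (simp add: e_def)
    show "\<gamma> 0 = (fst (\<gamma> 0), snd (\<gamma> 0))" by simp
    have m1: "-\<sigma>1 \<in> {-1,1}" using s1 by auto
    have xM: "fst (\<gamma> 0) + - \<sigma>1 * (e + Q) = (-\<sigma>1) * Q" using x0 by (simp add: e_def algebra_simps)
    have x1: "fst (\<gamma> 0) + - \<sigma>1 * (e + Q - (Q - a)) = (-\<sigma>1) * a" using x0 by (simp add: e_def algebra_simps)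
    have E1: "EE ((-\<sigma>1) * Q) = (-\<sigma>1) * Q^2 / 2" using EE_sv[OF m1] Qa a_pos by simp
    have E2: "EE (fst (\<gamma> 0)) = \<sigma>1 * e^2 / 2" using EE_sv[OF s1, of e] e x0 by (simp add: e_def)
    have E3: "EE ((-\<sigma>1) * a) = (-\<sigma>1) * a^2 / 2" using EE_sv[OF m1] a_pos by simp
    have ss1: "\<sigma>1 * \<sigma>1 = 1" using s1 by auto
    have "snd (\<gamma> z1) = snd (\<gamma> 0) + sgn c * (\<sigma>1 * \<sigma>1) * (e * z1 + z1^2 / 2)"
      using yz1 x0 by (simp add: e_def algebra_simps)
    then have yz1': "snd (\<gamma> z1) = snd (\<gamma> 0) + sgn c * (e * z1 + z1^2 / 2)" using ss1 by simp
    have ar: "e * z1 + z1^2 / 2 + a^2 = 3 * a^2 / 2 - e^2 / 2" by (simp add: e_def power2_eq_square field_simps)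
    have "snd (\<gamma> z3) = snd (\<gamma> 0) + sgn c * (e * z1 + z1^2 / 2 + a^2)"
      using yz3 yz2 yz1' by (simp add: algebra_simps power2_eq_square)
    then have yz3': "snd (\<gamma> z3) = snd (\<gamma> 0) + sgn c * (3 * a^2 / 2 - e^2 / 2)" using ar by simp
    have "snd (\<gamma> 0) + sgn c * - \<sigma>1 * (2 * EE ((-\<sigma>1) * Q) - EE (fst (\<gamma> 0)) - EE ((-\<sigma>1) * a))
        = snd (\<gamma> 0) + sgn c * (3 * a^2 / 2 - e^2 / 2)"
      unfolding E1 E2 E3 Qsq using s1 by (auto simp: field_simps)
    then show "\<gamma> z3 = (fst (\<gamma> 0) + - \<sigma>1 * (e + Q - (Q - a)),
        snd (\<gamma> 0) + sgn c * - \<sigma>1 * (2 * EE (fst (\<gamma> 0) + - \<sigma>1 * (e + Q)) - EE (fst (\<gamma> 0)) -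
          EE (fst (\<gamma> 0) + - \<sigma>1 * (e + Q - (Q - a)))))"
      unfolding xM x1 using xz3 s31 yz3' by (simp add: prod_eq_iff)
  qed
qed


lemma sqrt_facts:
  assumes a: "a > 0" and d: "d > 0"
  defines "Q \<equiv> sqrt (a^2 + d^2)"
  shows "Q^2 = a^2 + d^2" "d \<le> Q" "Q < a + d"
proof -
  show q2: "Q^2 = a^2 + d^2" unfolding Q_def by (rule real_sqrt_pow2) simp
  have "d^2 \<le> a^2 + d^2" by simp
  then show "d \<le> Q" unfolding Q_def using d by (metis less_imp_le real_le_rsqrt)
  have "a^2 + d^2 < (a + d)^2" using a d by (simp add: power2_eq_square algebra_simps)
  then have "Q < sqrt ((a + d)^2)" unfolding Q_def by (subst real_sqrt_less_iff) simp
  then show "Q < a + d" using a d by simp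
qed

lemma caseB:
  assumes adm: "admissible T \<gamma> u" and z: "0 < z1" "z1 < z2" "z2 < z3" "z3 \<le> T"
    and g1: "\<forall>t\<in>{0<..<z1}. fst (lam t) \<noteq> 0 \<and> fst (\<gamma> t) \<noteq> 0"
    and g2: "\<forall>t\<in>{z1<..<z2}. fst (lam t) \<noteq> 0 \<and> fst (\<gamma> t) \<noteq> 0"
    and g3: "\<forall>t\<in>{z2<..<z3}. fst (lam t) \<noteq> 0 \<and> fst (\<gamma> t) \<noteq> 0"
    and x1: "fst (\<gamma> z1) = 0" and zz2: "fst (lam z2) = 0 \<or> fst (\<gamma> z2) = 0"
    and zz3: "fst (lam z3) = 0 \<or> fst (\<gamma> z3) = 0"
  shows "\<not> time_minimizer T \<gamma>"
proof -
  note B1 = gapEndX[of 0 z1, OF _ _ _ g1 x1]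
  define \<sigma>1 where "\<sigma>1 = sgn (fst (lam ((0 + z1) / 2)))"
  have s1: "\<sigma>1 \<in> {-1,1}" and x0: "fst (\<gamma> 0) = - \<sigma>1 * z1" and pz1: "fst (lam z1) = \<sigma>1 * K"
    and yz1: "snd (\<gamma> z1) = snd (\<gamma> 0) + sgn c * z1^2 / 2"
    using B1 z unfolding \<sigma>1_def by auto
  note B2 = gapX[of z1 z2, OF _ _ _ g2 x1 zz2]
  define \<sigma>2 where "\<sigma>2 = sgn (fst (lam ((z1 + z2) / 2)))"
  have s2: "\<sigma>2 \<in> {-1,1}" and z2e: "z2 = z1 + a" and pz1': "fst (lam z1) = \<sigma>2 * K" and xz2: "fst (\<gamma> z2) = \<sigma>2 * a"
    and pz2: "fst (lam z2) = 0" and yz2: "snd (\<gamma> z2) = snd (\<gamma> z1) + sgn c * a^2 / 2"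
    using B2 z unfolding \<sigma>2_def by auto
  have s21: "\<sigma>2 = \<sigma>1" using pz1 pz1' K0 s1 s2 by auto
  note B3 = gapP[of z2 z3, OF _ _ _ g3 pz2 zz3]
  define \<sigma>3 where "\<sigma>3 = sgn (fst (lam ((z2 + z3) / 2)))"
  have s3: "\<sigma>3 \<in> {-1,1}" and z3e: "z3 = z2 + a" and xz2': "fst (\<gamma> z2) = - \<sigma>3 * a" and xz3: "fst (\<gamma> z3) = 0"
    and yz3: "snd (\<gamma> z3) = snd (\<gamma> z2) + sgn c * a^2 / 2"
    using B3 z unfolding \<sigma>3_def by auto
  define d where "d = z1"
  have d: "d > 0" using z by (simp add: d_def)
  define Q where "Q = sqrt (a^2 + d^2)"
  note SQ = sqrt_facts[OF a_pos d, folded Q_def]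
  have m1: "-\<sigma>1 \<in> {-1,1}" using s1 by auto
  show ?thesis
  proof (rule tent_beats[where \<rho>="-\<sigma>1" and s="sgn c" and ta="Q - d" and tb="Q" and z=z3,
        OF m1 sgnc _ _ adm _ z(4)])
    show "0 \<le> Q - d" "0 \<le> Q" using SQ d by auto
    show "0 \<le> z3" using z by simp
    show "Q - d + Q < z3" using z2e z3e SQ by (simp add: d_def)
    show "\<gamma> 0 = (fst (\<gamma> 0), snd (\<gamma> 0))" by simp
    have xM: "fst (\<gamma> 0) + - \<sigma>1 * (Q - d) = (-\<sigma>1) * Q" using x0 by (simp add: d_def algebra_simps)
    have xx1: "fst (\<gamma> 0) + - \<sigma>1 * (Q - d - Q) = 0" using x0 by (simp add: d_def algebra_simps)
    have E1: "EE ((-\<sigma>1) * Q) = (-\<sigma>1) * Q^2 / 2" using EE_sv[OF m1] SQ d by simp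
    have E2: "EE (fst (\<gamma> 0)) = (-\<sigma>1) * d^2 / 2" using EE_sv[OF m1, of d] d x0 by (simp add: d_def)
    have E3: "EE 0 = 0" by (simp add: EE_def)
    have yz3': "snd (\<gamma> z3) = snd (\<gamma> 0) + sgn c * (a^2 + d^2 / 2)"
      using yz3 yz2 yz1 by (simp add: d_def field_simps)
    have "snd (\<gamma> 0) + sgn c * - \<sigma>1 * (2 * EE ((-\<sigma>1) * Q) - EE (fst (\<gamma> 0)) - EE 0)
        = snd (\<gamma> 0) + sgn c * (a^2 + d^2 / 2)"
      unfolding E1 E2 E3 SQ(1) using s1 by (auto simp: field_simps)
    then show "\<gamma> z3 = (fst (\<gamma> 0) + - \<sigma>1 * (Q - d - Q),
        snd (\<gamma> 0) + sgn c * - \<sigma>1 * (2 * EE (fst (\<gamma> 0) + - \<sigma>1 * (Q - d)) - EE (fst (\<gamma> 0)) -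
          EE (fst (\<gamma> 0) + - \<sigma>1 * (Q - d - Q))))"
      unfolding xM xx1 using xz3 yz3' by (simp add: prod_eq_iff)
  qed
qed

lemma caseC:
  assumes adm: "admissible T \<gamma> u" and z: "0 < z1" "z1 < z2" "z2 < w" "w \<le> T"
    and g1: "\<forall>t\<in>{0<..<z1}. fst (lam t) \<noteq> 0 \<and> fst (\<gamma> t) \<noteq> 0"
    and g2: "\<forall>t\<in>{z1<..<z2}. fst (lam t) \<noteq> 0 \<and> fst (\<gamma> t) \<noteq> 0"
    and g3: "\<forall>t\<in>{z2<..<w}. fst (lam t) \<noteq> 0 \<and> fst (\<gamma> t) \<noteq> 0"
    and x0: "fst (\<gamma> 0) = 0" and zz1: "fst (lam z1) = 0 \<or> fst (\<gamma> z1) = 0"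
    and zz2: "fst (lam z2) = 0 \<or> fst (\<gamma> z2) = 0"
  shows "\<not> time_minimizer T \<gamma>"
proof -
  note C1 = gapX[of 0 z1, OF _ _ _ g1 x0 zz1]
  define \<sigma>1 where "\<sigma>1 = sgn (fst (lam ((0 + z1) / 2)))"
  have s1: "\<sigma>1 \<in> {-1,1}" and z1e: "z1 = a" and xz1: "fst (\<gamma> z1) = \<sigma>1 * a"
    and pz1: "fst (lam z1) = 0" and yz1: "snd (\<gamma> z1) = snd (\<gamma> 0) + sgn c * a^2 / 2"
    using C1 z unfolding \<sigma>1_def by auto
  note C2 = gapP[of z1 z2, OF _ _ _ g2 pz1 zz2]
  define \<sigma>2 where "\<sigma>2 = sgn (fst (lam ((z1 + z2) / 2)))"
  have s2: "\<sigma>2 \<in> {-1,1}" and z2e: "z2 = z1 + a" and xz1': "fst (\<gamma> z1) = - \<sigma>2 * a" and xz2: "fst (\<gamma> z2) = 0"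
    and pz2: "fst (lam z2) = \<sigma>2 * K" and yz2: "snd (\<gamma> z2) = snd (\<gamma> z1) + sgn c * a^2 / 2"
    using C2 z unfolding \<sigma>2_def by auto
  have s21: "\<sigma>2 = - \<sigma>1" using xz1 xz1' a_pos s1 s2 by auto
  have pz2n: "fst (lam z2) \<noteq> 0" using pz2 s2 K0 by auto
  note C3 = gap3[of z2 w, OF _ _ _ g3 xz2 pz2n]
  define \<sigma>3 where "\<sigma>3 = sgn (fst (lam ((z2 + w) / 2)))"
  have s3e: "\<sigma>3 = sgn (fst (lam z2))" and xw: "fst (\<gamma> w) = \<sigma>3 * (w - z2)"
    and yw: "snd (\<gamma> w) = snd (\<gamma> z2) + sgn c * (w - z2)^2 / 2"
    using C3 z unfolding \<sigma>3_def by auto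
  have s31: "\<sigma>3 = - \<sigma>1" using s3e pz2 s21 s1 K0 by (auto simp: sgn_mult)
  define d where "d = w - z2"
  have d: "d > 0" using z by (simp add: d_def)
  define Q where "Q = sqrt (a^2 + d^2)"
  note SQ = sqrt_facts[OF a_pos d, folded Q_def]
  have m1: "-\<sigma>1 \<in> {-1,1}" using s1 by auto
  show ?thesis
  proof (rule tent_beats[where \<rho>="-\<sigma>1" and s="sgn c" and ta="Q" and tb="Q - d" and z=w,
        OF m1 sgnc _ _ adm _ z(4)])
    show "0 \<le> Q - d" "0 \<le> Q" using SQ d by auto
    show "0 \<le> w" using z by simp
    show "Q + (Q - d) < w" using z1e z2e SQ by (simp add: d_def)
    show "\<gamma> 0 = (fst (\<gamma> 0), snd (\<gamma> 0))" by simp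
    have xM: "fst (\<gamma> 0) + - \<sigma>1 * Q = (-\<sigma>1) * Q" using x0 by simp
    have xx1: "fst (\<gamma> 0) + - \<sigma>1 * (Q - (Q - d)) = (-\<sigma>1) * d" using x0 by simp
    have E1: "EE ((-\<sigma>1) * Q) = (-\<sigma>1) * Q^2 / 2" using EE_sv[OF m1] SQ d by simp
    have E2: "EE ((-\<sigma>1) * d) = (-\<sigma>1) * d^2 / 2" using EE_sv[OF m1, of d] d by simp
    have E3: "EE (fst (\<gamma> 0)) = 0" using x0 by (simp add: EE_def)
    have yw': "snd (\<gamma> w) = snd (\<gamma> 0) + sgn c * (a^2 + d^2 / 2)"
      using yw yz2 yz1 by (simp add: d_def field_simps)
    have "snd (\<gamma> 0) + sgn c * - \<sigma>1 * (2 * EE ((-\<sigma>1) * Q) - EE (fst (\<gamma> 0)) - EE ((-\<sigma>1) * d))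
        = snd (\<gamma> 0) + sgn c * (a^2 + d^2 / 2)"
      unfolding E1 E2 E3 SQ(1) using s1 by (auto simp: field_simps)
    then show "\<gamma> w = (fst (\<gamma> 0) + - \<sigma>1 * (Q - (Q - d)),
        snd (\<gamma> 0) + sgn c * - \<sigma>1 * (2 * EE (fst (\<gamma> 0) + - \<sigma>1 * Q) - EE (fst (\<gamma> 0)) -
          EE (fst (\<gamma> 0) + - \<sigma>1 * (Q - (Q - d)))))"
      unfolding xM xx1 using xw s31 yw' by (simp add: prod_eq_iff d_def)
  qed
qed

end


lemma switching_simps:
  "switching lam \<gamma> 1 t = fst (lam t)" "switching lam \<gamma> 2 t = snd (lam t) * fst (\<gamma> t)"
  by (auto simp: switching_def Xf_def X1_def X2_def inner_prod_def)

lemma regular_iff: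
  "regular_interval T lam \<gamma> I \<longleftrightarrow> 0 \<le> fst I \<and> fst I < snd I \<and> snd I \<le> T \<and>
     (\<forall>t\<in>{fst I<..<snd I}. fst (lam t) \<noteq> 0 \<and> snd (lam t) * fst (\<gamma> t) \<noteq> 0)"
  unfolding regular_interval_def by (auto simp: switching_def Xf_def X1_def X2_def inner_prod_def)

lemma pick3:
  fixes Z :: "real set"
  assumes fin: "finite Z" and c: "card Z \<ge> 3"
  obtains z1 z2 z3 where "z1 \<in> Z" "z2 \<in> Z" "z3 \<in> Z" "z1 < z2" "z2 < z3"
    "\<And>t. t \<in> Z \<Longrightarrow> z1 \<le> t" "\<And>t. t \<in> Z \<Longrightarrow> t \<le> z1 \<or> z2 \<le> t" "\<And>t. t \<in> Z \<Longrightarrow> t \<le> z2 \<or> z3 \<le> t"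
proof -
  have ne: "Z \<noteq> {}" using c by auto
  define z1 where "z1 = Min Z"
  have z1: "z1 \<in> Z" "\<And>t. t \<in> Z \<Longrightarrow> z1 \<le> t" using fin ne by (auto simp: z1_def)
  define Z1 where "Z1 = Z - {z1}"
  have f1: "finite Z1" "card Z1 \<ge> 2" using fin c z1 by (auto simp: Z1_def)
  then have ne1: "Z1 \<noteq> {}" by auto
  define z2 where "z2 = Min Z1"
  have z2: "z2 \<in> Z1" "\<And>t. t \<in> Z1 \<Longrightarrow> z2 \<le> t" using f1 ne1 by (auto simp: z2_def)
  define Z2 where "Z2 = Z1 - {z2}"
  have f2: "finite Z2" "card Z2 \<ge> 1" using f1 z2 by (auto simp: Z2_def)
  then have ne2: "Z2 \<noteq> {}" by auto
  define z3 where "z3 = Min Z2"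
  have z3: "z3 \<in> Z2" "\<And>t. t \<in> Z2 \<Longrightarrow> z3 \<le> t" using f2 ne2 by (auto simp: z3_def)
  show ?thesis
  proof (rule that)
    show "z1 \<in> Z" "z2 \<in> Z" "z3 \<in> Z" using z1 z2 z3 by (auto simp: Z1_def Z2_def)
    show "z1 < z2" using z1(2)[of z2] z2 by (auto simp: Z1_def)
    show "z2 < z3" using z2(2)[of z3] z3 by (auto simp: Z2_def)
    show "\<And>t. t \<in> Z \<Longrightarrow> z1 \<le> t" by (rule z1(2))
    show "t \<le> z1 \<or> z2 \<le> t" if "t \<in> Z" for t using z2(2)[of t] that by (cases "t = z1") (auto simp: Z1_def)
    show "t \<le> z2 \<or> z3 \<le> t" if "t \<in> Z" for t
      using z3(2)[of t] z2(2)[of t] z1(2)[of t] that \<open>z1 < z2\<close> by (cases "t = z1"; cases "t = z2") (auto simp: Z1_def Z2_def)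
  qed
qed

lemma pick2:
  fixes Z :: "real set"
  assumes fin: "finite Z" and c: "card Z \<ge> 2" and sub: "Z \<subseteq> {0<..<T}"
  obtains z1 z2 w where "z1 \<in> Z" "z2 \<in> Z" "z1 < z2" "z2 < w" "w \<le> T"
    "\<And>t. t \<in> Z \<Longrightarrow> z1 \<le> t" "\<And>t. t \<in> Z \<Longrightarrow> t \<le> z1 \<or> z2 \<le> t" "\<And>t. t \<in> Z \<Longrightarrow> t \<le> z2 \<or> w \<le> t"
proof -
  have ne: "Z \<noteq> {}" using c by auto
  define z1 where "z1 = Min Z"
  have z1: "z1 \<in> Z" "\<And>t. t \<in> Z \<Longrightarrow> z1 \<le> t" using fin ne by (auto simp: z1_def)
  define Z1 where "Z1 = Z - {z1}"
  have f1: "finite Z1" "card Z1 \<ge> 1" using fin c z1 by (auto simp: Z1_def)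
  then have ne1: "Z1 \<noteq> {}" by auto
  define z2 where "z2 = Min Z1"
  have z2: "z2 \<in> Z1" "\<And>t. t \<in> Z1 \<Longrightarrow> z2 \<le> t" using f1 ne1 by (auto simp: z2_def)
  define Z2 where "Z2 = insert T (Z1 - {z2})"
  have f2: "finite Z2" "Z2 \<noteq> {}" using f1 by (auto simp: Z2_def)
  define w where "w = Min Z2"
  have w: "w \<in> Z2" "\<And>t. t \<in> Z2 \<Longrightarrow> w \<le> t" using f2 by (auto simp: w_def)
  have z2T: "z2 < T" using z2 sub by (auto simp: Z1_def)
  show ?thesis
  proof (rule that)
    show "z1 \<in> Z" "z2 \<in> Z" using z1 z2 by (auto simp: Z1_def)
    show "z1 < z2" using z1(2)[of z2] z2 by (auto simp: Z1_def)
    show "z2 < w" using w z2(2)[of w] z2T by (auto simp: Z2_def)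
    show "w \<le> T" using w(2)[of T] by (simp add: Z2_def)
    show "\<And>t. t \<in> Z \<Longrightarrow> z1 \<le> t" by (rule z1(2))
    show "t \<le> z1 \<or> z2 \<le> t" if "t \<in> Z" for t using z2(2)[of t] that by (cases "t = z1") (auto simp: Z1_def)
    show "t \<le> z2 \<or> w \<le> t" if "t \<in> Z" for t
      using w(2)[of t] z2(2)[of t] z1(2)[of t] that \<open>z1 < z2\<close> by (cases "t = z1"; cases "t = z2") (auto simp: Z1_def Z2_def)
  qed
qed


context ctx
begin

lemma arcs_card:
  assumes c0: "c \<noteq> 0" and fZ: "finite Z" and Zdef: "Z = {t\<in>{0<..<T}. fst (lam t) = 0 \<or> fst (\<gamma> t) = 0}"
  shows "card (arcs T lam \<gamma>) \<le> card Z + 1"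
proof -
  have reg: "regular_interval T lam \<gamma> I \<longleftrightarrow> 0 \<le> fst I \<and> fst I < snd I \<and> snd I \<le> T \<and>
     (\<forall>t\<in>{fst I<..<snd I}. fst (lam t) \<noteq> 0 \<and> fst (\<gamma> t) \<noteq> 0)" for I
  proof -
    have eq: "snd (lam t) * fst (\<gamma> t) \<noteq> 0 \<longleftrightarrow> fst (\<gamma> t) \<noteq> 0" if "t \<in> {0..T}" for t
      using q_const[OF that] c0 by simp
    have b: "(\<forall>t\<in>{fst I<..<snd I}. fst (lam t) \<noteq> 0 \<and> snd (lam t) * fst (\<gamma> t) \<noteq> 0) =
        (\<forall>t\<in>{fst I<..<snd I}. fst (lam t) \<noteq> 0 \<and> fst (\<gamma> t) \<noteq> 0)" if h: "0 \<le> fst I" "snd I \<le> T"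
    proof (rule ball_cong[OF refl])
      fix t assume "t \<in> {fst I<..<snd I}"
      then have "t \<in> {0..T}" using h by auto
      then show "(fst (lam t) \<noteq> 0 \<and> snd (lam t) * fst (\<gamma> t) \<noteq> 0) = (fst (lam t) \<noteq> 0 \<and> fst (\<gamma> t) \<noteq> 0)"
        using eq by simp
    qed
    show ?thesis unfolding regular_iff using b by blast
  qed
  have inj: "inj_on snd (arcs T lam \<gamma>)"
  proof (rule inj_onI)
    fix I J assume I: "I \<in> arcs T lam \<gamma>" and J: "J \<in> arcs T lam \<gamma>" and e: "snd I = snd J"
    have rI: "regular_interval T lam \<gamma> I" and rJ: "regular_interval T lam \<gamma> J" using I J unfolding arcs_def by auto
    have mxI: "\<And>K. regular_interval T lam \<gamma> K \<Longrightarrow> {fst I<..<snd I} \<subseteq> {fst K<..<snd K} \<Longrightarrow> K = I"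
      using I unfolding arcs_def by blast
    have mxJ: "\<And>K. regular_interval T lam \<gamma> K \<Longrightarrow> {fst J<..<snd J} \<subseteq> {fst K<..<snd K} \<Longrightarrow> K = J"
      using J unfolding arcs_def by blast
    show "I = J"
    proof (cases "fst I \<le> fst J")
      case True
      then have "{fst J<..<snd J} \<subseteq> {fst I<..<snd I}" using e by auto
      then show ?thesis using mxJ[OF rI] by simp
    next
      case False
      then have "{fst I<..<snd I} \<subseteq> {fst J<..<snd J}" using e by auto
      then show ?thesis using mxI[OF rJ] by simp
    qed
  qed
  have im: "snd ` arcs T lam \<gamma> \<subseteq> insert T Z"
  proof
    fix b assume "b \<in> snd ` arcs T lam \<gamma>"
    then obtain I where I: "I \<in> arcs T lam \<gamma>" "b = snd I" by blast
    have rI: "regular_interval T lam \<gamma> I" and mx: "\<And>J. regular_interval T lam \<gamma> J \<Longrightarrow>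
        {fst I<..<snd I} \<subseteq> {fst J<..<snd J} \<Longrightarrow> J = I"
      using I(1) unfolding arcs_def by blast+
    have I1: "0 \<le> fst I" "fst I < snd I" "snd I \<le> T" and I2: "\<forall>t\<in>{fst I<..<snd I}. fst (lam t) \<noteq> 0 \<and> fst (\<gamma> t) \<noteq> 0"
      using rI reg by auto
    show "b \<in> insert T Z"
    proof (rule ccontr)
      assume nb: "b \<notin> insert T Z"
      then have bT: "b < T" using I1 I(2) by auto
      have b0: "0 < b" using I1 I(2) by auto
      have nzb: "fst (lam b) \<noteq> 0" "fst (\<gamma> b) \<noteq> 0" using nb bT b0 unfolding Zdef by auto
      have bin: "b \<in> {0..T}" using b0 bT by auto
      obtain d1 where d1: "d1 > 0" "\<And>t. t \<in> {0..T} \<Longrightarrow> dist t b < d1 \<Longrightarrow> dist (fst (lam t)) (fst (lam b)) < \<bar>fst (lam b)\<bar>"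
        using contp bin nzb(1) unfolding continuous_on_iff by (metis zero_less_abs_iff)
      obtain d2 where d2: "d2 > 0" "\<And>t. t \<in> {0..T} \<Longrightarrow> dist t b < d2 \<Longrightarrow> dist (fst (\<gamma> t)) (fst (\<gamma> b)) < \<bar>fst (\<gamma> b)\<bar>"
        using contx bin nzb(2) unfolding continuous_on_iff by (metis zero_less_abs_iff)
      define d where "d = min d1 d2"
      define J where "J = (fst I, min T (b + d / 2))"
      have dpos: "d > 0" using d1 d2 by (simp add: d_def)
      have tJ: "fst (lam t) \<noteq> 0 \<and> fst (\<gamma> t) \<noteq> 0" if t: "t \<in> {fst J<..<snd J}" for t
      proof (cases "t < b")
        case True
        then show ?thesis using I2 t I(2) by (auto simp: J_def)
      next
        case False
        then have tin: "t \<in> {0..T}" and dt: "dist t b < d1" "dist t b < d2"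
          using t I1 I(2) dpos by (auto simp: J_def dist_real_def d_def)
        have "dist (fst (lam t)) (fst (lam b)) < \<bar>fst (lam b)\<bar>" using d1(2)[OF tin dt(1)] .
        moreover have "dist (fst (\<gamma> t)) (fst (\<gamma> b)) < \<bar>fst (\<gamma> b)\<bar>" using d2(2)[OF tin dt(2)] .
        ultimately show ?thesis by (auto simp: dist_real_def)
      qed
      have "0 \<le> fst J" "snd J \<le> T" "fst J < snd J" using I1 I(2) bT dpos by (auto simp: J_def)
      then have rJ: "regular_interval T lam \<gamma> J" unfolding reg using tJ by blast
      have "{fst I<..<snd I} \<subseteq> {fst J<..<snd J}" using I(2) bT dpos by (auto simp: J_def)
      then have "J = I" using mx rJ by blast
      then have "snd J = b" using I(2) by simp
      then show False using bT dpos by (auto simp: J_def)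
    qed
  qed
  have "card (arcs T lam \<gamma>) = card (snd ` arcs T lam \<gamma>)" using card_image[OF inj] by simp
  also have "\<dots> \<le> card (insert T Z)" using im fZ by (intro card_mono) auto
  also have "\<dots> \<le> card Z + 1" using fZ by (simp add: card_insert_if)
  finally show ?thesis .
qed

end


lemma main_aux:
  assumes rbb: "regular_bang_bang_lift T lam \<gamma> u" and c3: "card (arcs T lam \<gamma>) \<ge> 3"
  shows "(card (arcs T lam \<gamma>) > 3 \<longrightarrow> \<not> time_minimizer T \<gamma>) \<and>
         (fst (\<gamma> 0) = 0 \<longrightarrow> \<not> time_minimizer T \<gamma>)"
proof -
  have ext: "extremal_pair T lam \<gamma> u" and finA: "finite (arcs T lam \<gamma>)"
    and F: "\<exists>F. finite F \<and> {0..T} - F = (\<Union>I\<in>arcs T lam \<gamma>. {fst I<..<snd I})"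
    using rbb unfolding regular_bang_bang_lift_def by auto
  obtain F where fF: "finite F" and cov: "{0..T} - F = (\<Union>I\<in>arcs T lam \<gamma>. {fst I<..<snd I})" using F by blast
  have adm: "admissible T \<gamma> u" using ext by (simp add: extremal_pair_def)
  have acg: "abs_cont_on {0..T} \<gamma>" using adm by (simp add: admissible_def)
  have acl: "abs_cont_on {0..T} lam" using ext by (simp add: extremal_pair_def)
  obtain K N where K: "K \<ge> 0" and N: "negligible N" and gd: "\<And>t. t \<in> {0..T} - N \<Longrightarrow> good T lam \<gamma> u K t"
    using extremal_good[OF ext] by blast
  have "arcs T lam \<gamma> \<noteq> {}" using c3 by auto
  then obtain I where I: "I \<in> arcs T lam \<gamma>" by blast
  then have rI: "regular_interval T lam \<gamma> I" unfolding arcs_def by blast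
  then have I1: "0 \<le> fst I" "fst I < snd I" "snd I \<le> T"
    and I2: "\<forall>t\<in>{fst I<..<snd I}. fst (lam t) \<noteq> 0 \<and> snd (lam t) * fst (\<gamma> t) \<noteq> 0"
    unfolding regular_iff by auto
  have T0: "0 < T" using I1 by linarith
  interpret ctx T K lam \<gamma> u N using T0 acg acl N gd by unfold_locales auto
  define t0 where "t0 = (fst I + snd I) / 2"
  have t0: "t0 \<in> {fst I<..<snd I}" "t0 \<in> {0..T}" using I1 by (auto simp: t0_def)
  have nz0: "fst (lam t0) \<noteq> 0" "c * fst (\<gamma> t0) \<noteq> 0" using I2 t0 q_const[OF t0(2)] by auto
  have c0: "c \<noteq> 0" using nz0 by simp
  have K0: "K > 0" using inv[OF t0(2)] nz0 by auto
  interpret ctx2 T K lam \<gamma> u N using c0 K0 by unfold_locales auto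
  define Z where "Z = {t\<in>{0<..<T}. fst (lam t) = 0 \<or> fst (\<gamma> t) = 0}"
  have ZF: "Z \<subseteq> F"
  proof
    fix t assume t: "t \<in> Z"
    show "t \<in> F"
    proof (rule ccontr)
      assume "t \<notin> F"
      then have "t \<in> {0..T} - F" using t by (auto simp: Z_def)
      then obtain J where J: "J \<in> arcs T lam \<gamma>" "t \<in> {fst J<..<snd J}" using cov by blast
      then have "fst (lam t) \<noteq> 0 \<and> snd (lam t) * fst (\<gamma> t) \<noteq> 0"
        unfolding arcs_def regular_iff by blast
      then show False using t by (auto simp: Z_def)
    qed
  qed
  have fZ: "finite Z" using finite_subset[OF ZF fF] .
  have cZ: "card (arcs T lam \<gamma>) \<le> card Z + 1" by (rule arcs_card[OF c0 fZ Z_def])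
  have Zsub: "Z \<subseteq> {0<..<T}" by (auto simp: Z_def)
  have nzZ: "fst (lam t) \<noteq> 0 \<and> fst (\<gamma> t) \<noteq> 0" if "t \<in> {0<..<T}" "t \<notin> Z" for t
    using that by (auto simp: Z_def)
  show ?thesis
  proof (intro conjI impI)
    assume "card (arcs T lam \<gamma>) > 3"
    then have "card Z \<ge> 3" using cZ by simp
    then obtain z1 z2 z3 where z: "z1 \<in> Z" "z2 \<in> Z" "z3 \<in> Z" "z1 < z2" "z2 < z3"
      and o1: "\<And>t. t \<in> Z \<Longrightarrow> z1 \<le> t" and o2: "\<And>t. t \<in> Z \<Longrightarrow> t \<le> z1 \<or> z2 \<le> t"
      and o3: "\<And>t. t \<in> Z \<Longrightarrow> t \<le> z2 \<or> z3 \<le> t"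
      using pick3[OF fZ] by blast
    have zr: "0 < z1" "z3 \<le> T" "z3 < T" using z Zsub by auto
    have g1: "\<forall>t\<in>{0<..<z1}. fst (lam t) \<noteq> 0 \<and> fst (\<gamma> t) \<noteq> 0"
    proof
      fix t assume t: "t \<in> {0<..<z1}"
      then have "t \<notin> Z" using o1 by force
      then show "fst (lam t) \<noteq> 0 \<and> fst (\<gamma> t) \<noteq> 0" using nzZ t z zr by auto
    qed
    have g2: "\<forall>t\<in>{z1<..<z2}. fst (lam t) \<noteq> 0 \<and> fst (\<gamma> t) \<noteq> 0"
    proof
      fix t assume t: "t \<in> {z1<..<z2}"
      then have "t \<notin> Z" using o2 by force
      then show "fst (lam t) \<noteq> 0 \<and> fst (\<gamma> t) \<noteq> 0" using nzZ t z zr by auto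
    qed
    have g3: "\<forall>t\<in>{z2<..<z3}. fst (lam t) \<noteq> 0 \<and> fst (\<gamma> t) \<noteq> 0"
    proof
      fix t assume t: "t \<in> {z2<..<z3}"
      then have "t \<notin> Z" using o3 by force
      then show "fst (lam t) \<noteq> 0 \<and> fst (\<gamma> t) \<noteq> 0" using nzZ t z zr by auto
    qed
    have zz: "fst (lam z1) = 0 \<or> fst (\<gamma> z1) = 0" "fst (lam z2) = 0 \<or> fst (\<gamma> z2) = 0"
      "fst (lam z3) = 0 \<or> fst (\<gamma> z3) = 0" using z by (auto simp: Z_def)
    show "\<not> time_minimizer T \<gamma>"
    proof (cases "fst (lam z1) = 0")
      case True
      show ?thesis by (rule caseA[OF adm zr(1) z(4,5) zr(2) g1 g2 g3 True zz(2,3)])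
    next
      case False
      then have "fst (\<gamma> z1) = 0" using zz(1) by simp
      then show ?thesis by (rule caseB[OF adm zr(1) z(4,5) zr(2) g1 g2 g3 _ zz(2,3)])
    qed
  next
    assume x0: "fst (\<gamma> 0) = 0"
    have "card Z \<ge> 2" using cZ c3 by simp
    then obtain z1 z2 w where z: "z1 \<in> Z" "z2 \<in> Z" "z1 < z2" "z2 < w" "w \<le> T"
      and o1: "\<And>t. t \<in> Z \<Longrightarrow> z1 \<le> t" and o2: "\<And>t. t \<in> Z \<Longrightarrow> t \<le> z1 \<or> z2 \<le> t"
      and o3: "\<And>t. t \<in> Z \<Longrightarrow> t \<le> z2 \<or> w \<le> t"
      using pick2[OF fZ _ Zsub] by blast
    have zr: "0 < z1" using z Zsub by auto
    have g1: "\<forall>t\<in>{0<..<z1}. fst (lam t) \<noteq> 0 \<and> fst (\<gamma> t) \<noteq> 0"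
    proof
      fix t assume t: "t \<in> {0<..<z1}"
      then have "t \<notin> Z" using o1 by force
      then show "fst (lam t) \<noteq> 0 \<and> fst (\<gamma> t) \<noteq> 0" using nzZ t z zr Zsub by auto
    qed
    have g2: "\<forall>t\<in>{z1<..<z2}. fst (lam t) \<noteq> 0 \<and> fst (\<gamma> t) \<noteq> 0"
    proof
      fix t assume t: "t \<in> {z1<..<z2}"
      then have "t \<notin> Z" using o2 by force
      then show "fst (lam t) \<noteq> 0 \<and> fst (\<gamma> t) \<noteq> 0" using nzZ t z zr Zsub by auto
    qed
    have g3: "\<forall>t\<in>{z2<..<w}. fst (lam t) \<noteq> 0 \<and> fst (\<gamma> t) \<noteq> 0"
    proof
      fix t assume t: "t \<in> {z2<..<w}"
      then have "t \<notin> Z" using o3 by force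
      then show "fst (lam t) \<noteq> 0 \<and> fst (\<gamma> t) \<noteq> 0" using nzZ t z zr Zsub by auto
    qed
    have zz: "fst (lam z1) = 0 \<or> fst (\<gamma> z1) = 0" "fst (lam z2) = 0 \<or> fst (\<gamma> z2) = 0"
      using z by (auto simp: Z_def)
    show "\<not> time_minimizer T \<gamma>" by (rule caseC[OF adm zr z(3,4,5) g1 g2 g3 x0 zz])
  qed
qed

theorem mainTheorem11:
  shows "(\<forall>T lam \<gamma> u. regular_bang_bang_lift T lam \<gamma> u \<and> card (arcs T lam \<gamma>) > 3
            \<longrightarrow> \<not> time_minimizer T \<gamma>) \<and>
         (\<forall>T lam \<gamma> u. regular_bang_bang_lift T lam \<gamma> u \<and> fst (\<gamma> 0) = 0 \<and> time_minimizer T \<gamma>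
            \<longrightarrow> card (arcs T lam \<gamma>) \<le> 2)"
proof (intro conjI allI impI)
  fix T lam \<gamma> u
  assume h: "regular_bang_bang_lift T lam \<gamma> u \<and> card (arcs T lam \<gamma>) > 3"
  then show "\<not> time_minimizer T \<gamma>" using main_aux[of T lam \<gamma> u] by auto
next
  fix T lam \<gamma> u
  assume h: "regular_bang_bang_lift T lam \<gamma> u \<and> fst (\<gamma> 0) = 0 \<and> time_minimizer T \<gamma>"
  show "card (arcs T lam \<gamma>) \<le> 2"
  proof (rule ccontr)
    assume "\<not> card (arcs T lam \<gamma>) \<le> 2"
    then have "card (arcs T lam \<gamma>) \<ge> 3" by simp
    then show False using main_aux[of T lam \<gamma> u] h by auto
  qed
qed

end
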